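(* Suppose Assumptions (A1)–(A3) hold. Fix any constant $\kappa_2>1$ and set $\kappa_1=\frac{2+3L_f^2}{2\rho_2(L)}$, $\kappa_3=\frac14\big(1+(1+8\kappa_2+\frac{8}{\rho_2(L)})^{1/2}\big)$, $\kappa_4=(\kappa_2+\frac{1}{\rho_2(L)})L_f^2+\big((\kappa_2+\frac{1}{\rho_2(L)})^2L_f^2+2\big)^{1/2}L_f$. Let $\beta>\max\{\frac{\kappa_1}{\kappa_2-1},\kappa_3,\kappa_4\}$, $\alpha\in(\beta+\kappa_1,\kappa_2\beta]$, and define $\epsilon_1=(\alpha-\beta)\rho_2(L)-\frac12(2+3L_f^2)$, $\epsilon_2=\beta^2\rho(L)+(2\alpha^2+\beta^2)\rho^2(L)+\frac52L_f^2$, $\epsilon_3=\beta-\frac12-\frac{\alpha}{2\beta^2}-\frac{1}{2\beta\rho_2(L)}$, $\epsilon_4=2\beta^2+\frac12$, $\epsilon_5=\frac14-\frac{1}{2\beta}(\frac1\beta+\frac{1}{\rho_2(L)}+\frac\alpha\beta)L_f^2$, $\epsilon_6=\frac{1}{\beta^2}(1+\frac{1}{\rho_2(L)}+\frac\alpha\beta)L_f^2+\frac{L_f(1+L_f)}{2}$. Let $\eta\in(0,\min\{\epsilon_1/\epsilon_2,\epsilon_3/\epsilon_4,\epsilon_5/\epsilon_6\})$ and set $\epsilon_7=\eta\min\{\epsilon_1-\eta\epsilon_2,\ \epsilon_3-\eta\epsilon_4,\ \epsilon_5-\eta\epsilon_6,\ \frac14\}$, $\epsilon_8=\frac{\alpha+\beta}{2\beta}+\frac{1}{2\rho_2(L)}$.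 Let $\{\boldsymbol x_k\}$ be generated by Algorithm 1 with these $\alpha,\beta,\eta$. Then for all $T\in\mathbb N_0$, $$\frac{1}{T+1}\sum_{k=0}^T W_k\le \frac{\epsilon_8\hat V_0}{\epsilon_7(T+1)},\qquad f(\bar x_{T+1})-f^*\le \frac{\epsilon_8\hat V_0}{n}.$$
   Context: Network of $n$ agents communicating over a weighted undirected graph $\mathcal G$ with symmetric nonnegative adjacency matrix $A=(a_{ij})$, $a_{ii}=0$, Laplacian $L=(L_{ij})=\mathrm{diag}(A\mathbf 1_n)-A$. $\rho(L)$ is the largest eigenvalue of $L$ and $\rho_2(L)$ its smallest positive eigenvalue. Each agent $i$ has $f_i:\mathbb R^p\to\mathbb R$; $f(x)=\frac1n\sum_{i=1}^n f_i(x)$, $\mathbb X^*=\arg\min f$, $f^*=\min f$. Assumptions: (A1) $\mathcal G$ is connected; (A2) $\mathbb X^*\neq\emptyset$ and $f^*>-\infty$; (A3) each $f_i$ is differentiable with $\|\nabla f_i(x)-\nabla f_i(y)\|\le L_f\|x-y\|$ for all $x,y$, for some $L_f>0$. Algorithm 1 (parameters $\alpha,\beta,\eta>0$): arbitrary $x_{i,0}\in\mathbb R^p$, $v_{i,0}\in\mathbb R^p$ with $\sum_{j=1}^n v_{j,0}=\mathbf 0_p$ (e.g. $v_{i,0}=\mathbf 0_p$), and for $k\ge0$, $i\in[n]$: $x_{i,k+1}=x_{i,k}-\eta\big(\alpha\sum_{j=1}^n L_{ij}x_{j,k}+\beta v_{i,k}+\nabla f_i(x_{i,k})\big)$, $v_{i,k+1}=v_{i,k}+\eta\beta\sum_{j=1}^nL_{ij}x_{j,k}$.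 Notation: $\boldsymbol x_k=\mathrm{col}(x_{1,k},\dots,x_{n,k})$, $\boldsymbol v_k=\mathrm{col}(v_{1,k},\dots,v_{n,k})$, $\boldsymbol K=(I_n-\frac1n\mathbf 1_n\mathbf 1_n^\top)\otimes I_p$, $\boldsymbol H=\frac1n(\mathbf 1_n\mathbf 1_n^\top)\otimes I_p$, $\|z\|_M^2=z^\top Mz$. $\bar x_k=\frac1n\sum_i x_{i,k}$, $\bar{\boldsymbol x}_k=\mathbf 1_n\otimes \bar x_k$, $\boldsymbol g_k=\mathrm{col}(\nabla f_1(x_{1,k}),\dots,\nabla f_n(x_{n,k}))$, $\bar{\boldsymbol g}_k=\boldsymbol H\boldsymbol g_k$, $\boldsymbol g_k^0=\mathrm{col}(\nabla f_1(\bar x_k),\dots,\nabla f_n(\bar x_k))$, $\bar{\boldsymbol g}^0_k=\boldsymbol H\boldsymbol g^0_k=\mathbf 1_n\otimes\nabla f(\bar x_k)$. $\hat V_k=\|\boldsymbol x_k\|^2_{\boldsymbol K}+\|\boldsymbol v_k+\frac1\beta\boldsymbol g_k^0\|^2_{\boldsymbol K}+n(f(\bar x_k)-f^* )$, $W_k=\|\boldsymbol x_k-\bar{\boldsymbol x}_k\|^2+\|\boldsymbol v_k+\frac1\beta\boldsymbol g^0_k\|^2_{\boldsymbol K}+\|\bar{\boldsymbol g}_k\|^2+\|\bar{\boldsymbol g}_k^0\|^2$. *)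

theory Defs
  imports "HOL-Analysis.Analysis"
begin

definition sym_nonneg_adj :: "real^'n^'n \<Rightarrow> bool" where
  "sym_nonneg_adj A \<longleftrightarrow> (\<forall>i j. A$i$j = A$j$i) \<and> (\<forall>i j. 0 \<le> A$i$j) \<and> (\<forall>i. A$i$i = 0)"

definition graph_connected :: "real^'n^'n \<Rightarrow> bool" where
  "graph_connected A \<longleftrightarrow> (\<forall>i j. (i, j) \<in> {(k, l). 0 < A$k$l}\<^sup>*)"

definition laplacian :: "real^'n^'n \<Rightarrow> real^'n^'n" where
  "laplacian A = (\<chi> i j. (if i = j then (\<Sum>k\<in>UNIV. A$i$k) else 0) - A$i$j)"

definition is_eigenvalue :: "real^'n^'n \<Rightarrow> real \<Rightarrow> bool" where
  "is_eigenvalue M lam \<longleftrightarrow> (\<exists>v. v \<noteq> 0 \<and> M *v v = lam *\<^sub>R v)"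

definition rho :: "real^'n^'n \<Rightarrow> real" where
  "rho M = Max {lam. is_eigenvalue M lam}"

definition rho2 :: "real^'n^'n \<Rightarrow> real" where
  "rho2 M = Min {lam. is_eigenvalue M lam \<and> 0 < lam}"

definition avg :: "('n::finite \<Rightarrow> 'a::real_vector) \<Rightarrow> 'a" where
  "avg z = (1 / real CARD('n)) *\<^sub>R (\<Sum>i\<in>UNIV. z i)"

definition Knorm2 :: "('n::finite \<Rightarrow> 'a::real_normed_vector) \<Rightarrow> real" where
  "Knorm2 z = (\<Sum>i\<in>UNIV. (norm (z i - avg z))\<^sup>2)"

end

theory Submission
  imports Defs
begin


definition Hop :: "('a::real_vector)^'n \<Rightarrow> 'a^'n" where
  "Hop z = (\<chi> i. (1 / real CARD('n)) *\<^sub>R (\<Sum>j\<in>UNIV. z$j))"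
definition Kop :: "('a::real_vector)^'n \<Rightarrow> 'a^'n" where
  "Kop z = z - Hop z"
definition Lop :: "real^'n^'n \<Rightarrow> ('a::real_vector)^'n \<Rightarrow> 'a^'n" where
  "Lop M z = (\<chi> i. \<Sum>j\<in>UNIV. M$i$j *\<^sub>R z$j)"

lemma Hop_nth: "Hop z $ i = (1 / real CARD('n)) *\<^sub>R (\<Sum>j\<in>UNIV. z$j)"
  for z :: "('a::real_vector)^'n" by (simp add: Hop_def)
lemma Lop_nth: "Lop M z $ i = (\<Sum>j\<in>UNIV. M$i$j *\<^sub>R z$j)" by (simp add: Lop_def)

lemma card_pos: "0 < real CARD('n::finite)" by simp
lemma sum_avg: "(\<Sum>i\<in>(UNIV::'n::finite set). (1 / real CARD('n)) *\<^sub>R (s::'a::real_vector)) = s"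
  by (simp add: sum_constant_scaleR)

lemma sum_Hop: "(\<Sum>i\<in>UNIV. Hop z $ i) = (\<Sum>j\<in>UNIV. z$j)"
  for z :: "('a::real_vector)^'n"
  by (simp add: Hop_nth sum_avg)

lemma linear_Hop: "linear (Hop :: ('a::real_vector)^'n \<Rightarrow> _)"
  by (rule linearI) (auto simp: Hop_def vec_eq_iff sum.distrib scaleR_sum_right algebra_simps)
lemma linear_Kop: "linear (Kop :: ('a::real_vector)^'n \<Rightarrow> _)"
  unfolding Kop_def by (intro linear_compose_sub linear_ident linear_Hop)
lemma linear_Lop: "linear (Lop M :: ('a::real_vector)^'n \<Rightarrow> _)"
  by (rule linearI) (auto simp: Lop_def vec_eq_iff sum.distrib scaleR_sum_right algebra_simps)

lemma Hop_Hop: "Hop (Hop z) = Hop z" for z :: "('a::real_vector)^'n"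
  by (simp add: vec_eq_iff Hop_nth sum_avg)
lemma Hop_Kop: "Hop (Kop z) = 0" for z :: "('a::real_vector)^'n"
  using linear_diff[OF linear_Hop, of z "Hop z"] by (simp add: Kop_def Hop_Hop)
lemma Kop_Kop: "Kop (Kop z) = Kop z" for z :: "('a::real_vector)^'n"
  by (simp add: Kop_def[of "Kop z"] Hop_Kop)
lemma Kop_Hop: "Kop (Hop z) = 0" for z :: "('a::real_vector)^'n"
  by (simp add: Kop_def Hop_Hop)

lemma inner_Hop: "inner (Hop z) w = inner z (Hop w)" for z :: "('a::real_inner)^'n"
  by (simp add: inner_vec_def Hop_nth inner_sum_left inner_sum_right sum_distrib_left)
    (subst sum.swap, simp)
lemma inner_Kop: "inner (Kop z) w = inner z (Kop w)" for z :: "('a::real_inner)^'n"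
  by (simp add: Kop_def inner_diff_left inner_diff_right inner_Hop)
lemma inner_Hop_Kop: "inner (Hop z) (Kop w) = 0" for z :: "('a::real_inner)^'n"
  by (simp add: inner_Hop Hop_Kop)
lemma norm_split: "(norm z)\<^sup>2 = (norm (Hop z))\<^sup>2 + (norm (Kop z))\<^sup>2" for z :: "('a::real_inner)^'n"
proof -
  have e: "Hop z + Kop z = z" by (simp add: Kop_def)
  have "(norm (Hop z + Kop z))\<^sup>2 = (norm (Hop z))\<^sup>2 + (norm (Kop z))\<^sup>2"
    unfolding power2_norm_eq_inner inner_add_left inner_add_right
    using inner_Hop_Kop[of z z] by (simp add: inner_commute)
  then show ?thesis unfolding e .
qed
lemma norm_Kop_le: "norm (Kop z) \<le> norm z" for z :: "('a::real_inner)^'n"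
  by (rule power2_le_imp_le) (use norm_split[of z] in auto)
lemma norm_Hop_le: "norm (Hop z) \<le> norm z" for z :: "('a::real_inner)^'n"
  by (rule power2_le_imp_le) (use norm_split[of z] in auto)

lemma norm_sq_vec: "(norm z)\<^sup>2 = (\<Sum>i\<in>UNIV. (norm (z$i))\<^sup>2)" for z :: "('a::real_inner)^'n"
  by (simp add: power2_norm_eq_inner inner_vec_def)

lemma Knorm2_eq: "Knorm2 z = (norm (Kop (vec_lambda z)))\<^sup>2"
  for z :: "'n::finite \<Rightarrow> 'a::real_inner"
  by (simp add: Knorm2_def norm_sq_vec Kop_def Hop_nth avg_def)

lemma norm_Hop_sq: "(norm (Hop z))\<^sup>2 = real CARD('n) * (norm ((1 / real CARD('n)) *\<^sub>R (\<Sum>j\<in>UNIV. z$j)))\<^sup>2"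
  for z :: "('a::real_inner)^'n"
  by (simp add: norm_sq_vec Hop_nth)

lemma lap_entry: "laplacian A $ i $ j = (if i = j then (\<Sum>k\<in>UNIV. A$i$k) else 0) - A$i$j"
  by (simp add: laplacian_def)

lemma lap_mult: "laplacian A $ i $ j * c = (if i = j then (\<Sum>k\<in>UNIV. A$i$k) * c else 0) - A$i$j * c"
  by (simp add: lap_entry left_diff_distrib)

lemma lap_row_sum: "(\<Sum>j\<in>UNIV. laplacian A $ i $ j) = 0"
  by (simp add: lap_entry sum_subtractf sum.delta sum.delta')

lemma lap_sym: assumes "sym_nonneg_adj A" shows "laplacian A $ i $ j = laplacian A $ j $ i"
  using assms by (auto simp: lap_entry sym_nonneg_adj_def)

lemma lap_col_sum: assumes "sym_nonneg_adj A" shows "(\<Sum>i\<in>UNIV. laplacian A $ i $ j) = 0"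
  using lap_row_sum[of A j] lap_sym[OF assms] by simp

lemma Hop_Lop: assumes "sym_nonneg_adj A" shows "Hop (Lop (laplacian A) z) = 0"
proof -
  have "(\<Sum>i\<in>UNIV. Lop (laplacian A) z $ i) = (\<Sum>j\<in>UNIV. (\<Sum>i\<in>UNIV. laplacian A $ i $ j) *\<^sub>R z $ j)"
    by (simp add: Lop_nth scaleR_sum_left) (rule sum.swap)
  also have "\<dots> = 0" by (simp add: lap_col_sum[OF assms])
  finally show ?thesis by (simp add: Hop_def vec_eq_iff)
qed

lemma Lop_Hop: fixes z :: "('a::real_vector)^'n" shows "Lop (laplacian A) (Hop z) = 0"
proof -
  have "Lop (laplacian A) (Hop z) $ i = 0" for i
  proof -
    have "Lop (laplacian A) (Hop z) $ i = (\<Sum>j\<in>UNIV. laplacian A $ i $ j) *\<^sub>R ((1 / real CARD('n)) *\<^sub>R (\<Sum>j\<in>UNIV. z$j))"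
      by (simp only: Lop_nth Hop_nth scaleR_sum_left)
    then show ?thesis by (simp add: lap_row_sum)
  qed
  then show ?thesis by (simp add: vec_eq_iff)
qed

lemma Lop_Kop: "Lop (laplacian A) (Kop z) = Lop (laplacian A) z"
  using linear_diff[OF linear_Lop, of "laplacian A" z "Hop z"] by (simp add: Kop_def Lop_Hop)

lemma Kop_Lop: assumes "sym_nonneg_adj A" shows "Kop (Lop (laplacian A) z) = Lop (laplacian A) z"
  by (simp add: Kop_def Hop_Lop[OF assms])

lemma inner_Lop: assumes "sym_nonneg_adj A"
  shows "inner (Lop (laplacian A) z) w = inner z (Lop (laplacian A) w)"
proof -
  have "inner (Lop (laplacian A) z) w = (\<Sum>i\<in>UNIV. \<Sum>j\<in>UNIV. laplacian A $ i $ j * inner (z$j) (w$i))"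
    by (simp add: inner_vec_def Lop_nth inner_sum_left)
  also have "\<dots> = (\<Sum>j\<in>UNIV. \<Sum>i\<in>UNIV. laplacian A $ i $ j * inner (z$j) (w$i))"
    by (rule sum.swap)
  also have "\<dots> = inner z (Lop (laplacian A) w)"
    by (simp add: inner_vec_def Lop_nth inner_sum_right lap_sym[OF assms] mult.commute)
  finally show ?thesis .
qed

lemma quad_Lop: fixes z :: "('a::real_inner)^'n" assumes "sym_nonneg_adj A"
  shows "inner z (Lop (laplacian A) z) = (1/2) * (\<Sum>i\<in>UNIV. \<Sum>j\<in>UNIV. A$i$j * (norm (z$i - z$j))\<^sup>2)"
proof -
  have s: "A$i$j = A$j$i" for i j using assms by (simp add: sym_nonneg_adj_def)
  have d: "A$i$i = 0" for i using assms by (simp add: sym_nonneg_adj_def)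
  have "inner z (Lop (laplacian A) z) = (\<Sum>i\<in>UNIV. \<Sum>j\<in>UNIV. laplacian A $ i $ j * inner (z$i) (z$j))"
    by (simp add: inner_vec_def Lop_nth inner_sum_right)
  also have "\<dots> = (\<Sum>i\<in>UNIV. \<Sum>j\<in>UNIV. A$i$j * inner (z$i) (z$i)) - (\<Sum>i\<in>UNIV. \<Sum>j\<in>UNIV. A$i$j * inner (z$i) (z$j))"
    by (simp add: lap_mult sum_subtractf sum_distrib_right)
  finally have 1: "inner z (Lop (laplacian A) z) = \<dots>" .
  have sw: "(\<Sum>i\<in>UNIV. \<Sum>j\<in>UNIV. A$i$j * inner (z$j) (z$j)) = (\<Sum>i\<in>UNIV. \<Sum>j\<in>UNIV. A$i$j * inner (z$i) (z$i))"
    by (subst sum.swap) (simp add: s)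
  have "(\<Sum>i\<in>UNIV. \<Sum>j\<in>UNIV. A$i$j * (norm (z$i - z$j))\<^sup>2)
      = (\<Sum>i\<in>UNIV. \<Sum>j\<in>UNIV. A$i$j * inner (z$i) (z$i)) + (\<Sum>i\<in>UNIV. \<Sum>j\<in>UNIV. A$i$j * inner (z$j) (z$j))
        - 2 * (\<Sum>i\<in>UNIV. \<Sum>j\<in>UNIV. A$i$j * inner (z$i) (z$j))"
    by (simp add: power2_norm_eq_inner inner_diff_left inner_diff_right inner_commute[of "z$j" "z$i" for i j]
        algebra_simps sum.distrib sum_subtractf sum_distrib_left)
  then show ?thesis using 1 sw by simp
qed

lemma quad_Lop_nonneg: fixes z :: "('a::real_inner)^'n" assumes "sym_nonneg_adj A" shows "0 \<le> inner z (Lop (laplacian A) z)"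
  unfolding quad_Lop[OF assms] using assms
  by (auto simp: sym_nonneg_adj_def intro!: sum_nonneg mult_nonneg_nonneg)

lemma Lop_zero_const: fixes z :: "('a::real_inner)^'n"
  assumes "sym_nonneg_adj A" "graph_connected A" "Lop (laplacian A) z = 0"
  shows "z$i = z$j"
proof -
  have q: "(\<Sum>i\<in>UNIV. \<Sum>j\<in>UNIV. A$i$j * (norm (z$i - z$j))\<^sup>2) = 0"
    using quad_Lop[OF assms(1), of z] assms(3) by simp
  have nn: "0 \<le> A$i$j * (norm (z$i - z$j))\<^sup>2" for i j
    using assms(1) by (simp add: sym_nonneg_adj_def)
  have e: "A$k$l * (norm (z$k - z$l))\<^sup>2 = 0" for k l
  proof -
    have "(\<Sum>j\<in>UNIV. A$k$j * (norm (z$k - z$j))\<^sup>2) = 0"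
      using q by (subst (asm) sum_nonneg_eq_0_iff) (auto intro!: sum_nonneg nn)
    then show ?thesis by (subst (asm) sum_nonneg_eq_0_iff) (auto intro!: nn)
  qed
  have edge: "0 < A$k$l \<Longrightarrow> z$k = z$l" for k l using e[of k l] by simp
  have "(i, j) \<in> {(k, l). 0 < A$k$l}\<^sup>*" using assms(2) by (simp add: graph_connected_def)
  then show ?thesis
    by (induction rule: rtrancl_induct) (auto dest: edge)
qed

lemma Lop_zero_Kop: fixes z :: "('a::real_inner)^'n"
  assumes "sym_nonneg_adj A" "graph_connected A" "Lop (laplacian A) z = 0"
  shows "Kop z = 0"
proof -
  have "z$i = Hop z $ i" for i
  proof -
    have "(\<Sum>j\<in>UNIV. z$j) = (\<Sum>j::'n\<in>UNIV. z$i)"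
      by (rule sum.cong[OF refl]) (rule Lop_zero_const[OF assms])
    then have "Hop z $ i = (1 / real CARD('n)) *\<^sub>R (\<Sum>j::'n\<in>UNIV. z$i)"
      unfolding Hop_nth by simp
    then show ?thesis by (simp add: sum_constant_scaleR)
  qed
  then show ?thesis by (simp add: Kop_def vec_eq_iff)
qed

section \<open>PSD forms\<close>

lemma psd_kernel:
  fixes N :: "'a::real_inner \<Rightarrow> 'a"
  assumes lin: "linear N" and sym: "\<And>x y. inner (N x) y = inner x (N y)"
    and psd: "\<And>x. 0 \<le> inner x (N x)" and u: "inner u (N u) = 0"
  shows "N u = 0"
proof (rule ccontr)
  assume ne: "N u \<noteq> 0"
  define s where "s = inner (N u) (N u)"
  define c where "c = inner (N u) (N (N u))"
  have s_pos: "0 < s" using ne by (simp add: s_def)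
  define t where "t = - s / (\<bar>c\<bar> + 1)"
  have "0 \<le> inner (u + t *\<^sub>R N u) (N (u + t *\<^sub>R N u))" by (rule psd)
  also have "\<dots> = inner u (N u) + 2 * t * s + t * t * c"
    using sym[of u "N u"]
    by (simp add: linear_add[OF lin] linear_scale[OF lin] inner_add_left inner_add_right
        s_def c_def algebra_simps inner_commute[of u "N (N u)"])
  also have "\<dots> = t * (2 * s + t * c)" using u by (simp add: algebra_simps)
  finally have 0: "0 \<le> t * (2 * s + t * c)" .
  have tneg: "t < 0" using s_pos by (simp add: t_def)
  have "t * c \<ge> - s"
  proof -
    have "\<bar>t * c\<bar> = s * \<bar>c\<bar> / (\<bar>c\<bar> + 1)" using s_pos by (simp add: t_def abs_mult abs_divide)
    also have "\<dots> \<le> s" using s_pos by (simp add: divide_le_eq)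
    finally show ?thesis by linarith
  qed
  then have "2 * s + t * c > 0" using s_pos by linarith
  then have "t * (2 * s + t * c) < 0" using tneg by (simp add: mult_neg_pos)
  then show False using 0 by linarith
qed

lemma psd_cs:
  fixes N :: "'a::real_inner \<Rightarrow> 'a"
  assumes lin: "linear N" and sym: "\<And>x y. inner (N x) y = inner x (N y)"
    and psd: "\<And>x. 0 \<le> inner x (N x)"
  shows "(inner x (N y))\<^sup>2 \<le> inner x (N x) * inner y (N y)"
proof (cases "inner y (N y) = 0")
  case True
  then have "N y = 0" using psd_kernel[OF lin sym psd] by blast
  then show ?thesis using True by simp
next
  case False
  define b where "b = inner y (N y)"
  define e where "e = inner x (N y)"
  have bpos: "0 < b" using False psd[of y] by (simp add: b_def)
  define t where "t = - e / b"
  have "0 \<le> inner (x + t *\<^sub>R y) (N (x + t *\<^sub>R y))" by (rule psd)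
  also have "\<dots> = inner x (N x) + 2 * t * e + t * t * b"
    using sym[of y x] sym[of x y]
    by (simp add: linear_add[OF lin] linear_scale[OF lin] inner_add_left inner_add_right
        b_def e_def algebra_simps inner_commute[of y "N x"])
  also have "\<dots> = inner x (N x) - e\<^sup>2 / b"
    using bpos by (simp add: t_def field_simps power2_eq_square)
  finally have "e\<^sup>2 / b \<le> inner x (N x)" by simp
  then have "e\<^sup>2 \<le> inner x (N x) * b" using bpos by (simp add: divide_le_eq)
  then show ?thesis by (simp add: e_def b_def)
qed

lemma Lop_comp: "Lop M u $ j $ k = (\<Sum>l\<in>UNIV. M$j$l * u$l$k)"
  for u :: "(real^'p)^'n"
  by (simp add: Lop_nth)

lemma eig_extract:
  fixes u :: "(real^'p)^'n"
  assumes eq: "Lop M u = c *\<^sub>R u" and ne: "u \<noteq> 0"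
  shows "is_eigenvalue M c"
proof -
  obtain i k where ik: "u$i$k \<noteq> 0" using ne by (metis vec_eq_iff zero_index)
  define w where "w = (\<chi> j. u$j$k)"
  have "w \<noteq> 0" using ik by (metis vec_lambda_beta w_def zero_index)
  moreover have "M *v w = c *\<^sub>R w"
  proof -
    have "(M *v w) $ j = (c *\<^sub>R w) $ j" for j
    proof -
      have "(M *v w) $ j = Lop M u $ j $ k" by (simp add: matrix_vector_mult_def w_def Lop_comp)
      also have "\<dots> = c * u$j$k" using eq by simp
      finally show ?thesis by (simp add: w_def)
    qed
    then show ?thesis by (simp add: vec_eq_iff)
  qed
  ultimately show ?thesis unfolding is_eigenvalue_def by blast
qed

lemma mat_sym_inner:
  fixes M :: "real^'n^'n" and v w :: "real^'n"
  assumes "\<And>i j. M$i$j = M$j$i"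
  shows "inner (M *v v) w = inner v (M *v w)"
proof -
  have "inner (M *v v) w = (\<Sum>i\<in>UNIV. \<Sum>j\<in>UNIV. M$i$j * v$j * w$i)"
    by (simp add: inner_vec_def matrix_vector_mult_def sum_distrib_right)
  also have "\<dots> = (\<Sum>j\<in>UNIV. \<Sum>i\<in>UNIV. M$i$j * v$j * w$i)" by (rule sum.swap)
  also have "\<dots> = inner v (M *v w)"
    by (simp add: inner_vec_def matrix_vector_mult_def sum_distrib_left assms mult.commute mult.left_commute)
  finally show ?thesis .
qed

lemma eig_finite:
  fixes M :: "real^'n^'n"
  assumes sym: "\<And>i j. M$i$j = M$j$i"
  shows "finite {lam. is_eigenvalue M lam}"
proof -
  define E where "E = {lam. is_eigenvalue M lam}"
  define ev where "ev lam = (SOME v. v \<noteq> 0 \<and> M *v v = lam *\<^sub>R v)" for lam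
  have evp: "ev lam \<noteq> 0 \<and> M *v ev lam = lam *\<^sub>R ev lam" if "lam \<in> E" for lam
  proof -
    have "\<exists>v. v \<noteq> 0 \<and> M *v v = lam *\<^sub>R v" using that unfolding E_def is_eigenvalue_def by simp
    then show ?thesis unfolding ev_def by (rule someI_ex[where P="\<lambda>v. v \<noteq> 0 \<and> M *v v = lam *\<^sub>R v"])
  qed
  have inj: "inj_on ev E"
  proof (rule inj_onI)
    fix a b assume a: "a \<in> E" and b: "b \<in> E" and e: "ev a = ev b"
    have "a *\<^sub>R ev a = M *v ev a" using evp[OF a] by simp
    also have "\<dots> = M *v ev b" by (simp only: e)
    also have "\<dots> = b *\<^sub>R ev b" using evp[OF b] by simp
    also have "\<dots> = b *\<^sub>R ev a" by (simp only: e)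
    finally have "a *\<^sub>R ev a = b *\<^sub>R ev a" .
    then show "a = b" using evp[OF a] by (simp add: scaleR_cancel_right)
  qed
  have "pairwise orthogonal (ev ` E)"
  proof (rule pairwiseI)
    fix x y assume "x \<in> ev ` E" "y \<in> ev ` E" "x \<noteq> y"
    then obtain a b where a: "a \<in> E" and b: "b \<in> E" and xy: "x = ev a" "y = ev b" "a \<noteq> b" by blast
    have "a * inner x y = inner (M *v x) y" using evp[OF a] xy by simp
    also have "\<dots> = inner x (M *v y)" by (rule mat_sym_inner[OF sym])
    also have "\<dots> = b * inner x y" using evp[OF b] xy by simp
    finally have "(a - b) * inner x y = 0" by (simp add: algebra_simps)
    then show "orthogonal x y" using xy(3) by (simp add: orthogonal_def)
  qed
  then have "finite (ev ` E)" by (rule pairwise_orthogonal_imp_finite)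
  then show ?thesis using inj finite_imageD unfolding E_def by blast
qed

section \<open>Spectral bounds\<close>

lemma norm_axis_gen: "norm (axis i v :: ('a::real_inner)^'n) = norm v"
proof -
  have "(norm (axis i v :: ('a::real_inner)^'n))\<^sup>2 = (norm v)\<^sup>2"
  proof -
    have "(\<Sum>j\<in>UNIV. (norm ((axis i v :: ('a::real_inner)^'n) $ j))\<^sup>2) = (\<Sum>j\<in>UNIV. if j = i then (norm v)\<^sup>2 else 0)"
      by (rule sum.cong) (auto simp: axis_def)
    then show ?thesis by (simp add: norm_sq_vec)
  qed
  then show ?thesis by (simp add: power2_eq_iff_nonneg)
qed

lemma lap_sym_all: assumes "sym_nonneg_adj A" shows "\<And>i j. laplacian A $ i $ j = laplacian A $ j $ i"
  using lap_sym[OF assms] by blast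

lemma continuous_quad: "continuous_on S (\<lambda>z::(real^'p)^'n. inner z (Lop M z))"
proof -
  have "bounded_linear (Lop M :: (real^'p)^'n \<Rightarrow> _)"
    using linear_Lop linear_conv_bounded_linear by blast
  then have "continuous_on S (Lop M :: (real^'p)^'n \<Rightarrow> _)" by (rule linear_continuous_on)
  then show ?thesis by (intro continuous_on_inner continuous_on_id)
qed

lemma quad_scale: "inner (c *\<^sub>R z) (Lop M (c *\<^sub>R z)) = c\<^sup>2 * inner z (Lop M z)"
  for z :: "(real^'p)^'n"
  by (simp add: linear_scale[OF linear_Lop] power2_eq_square)

lemma spec_upper:
  fixes z :: "(real^'p)^'n"
  assumes adj: "sym_nonneg_adj A"
  shows "inner z (Lop (laplacian A) z) \<le> rho (laplacian A) * (norm z)\<^sup>2 \<and> 0 \<le> rho (laplacian A)"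
proof -
  let ?L = "Lop (laplacian A) :: (real^'p)^'n \<Rightarrow> _"
  let ?q = "\<lambda>z. inner z (?L z)"
  have ne: "sphere (0::(real^'p)^'n) 1 \<noteq> {}"
  proof -
    have "(axis undefined (axis undefined (1::real)) :: (real^'p)^'n) \<in> sphere 0 1"
      by (simp add: norm_axis_gen)
    then show ?thesis by blast
  qed
  obtain u where u: "u \<in> sphere 0 1" and umax: "\<And>y. y \<in> sphere 0 1 \<Longrightarrow> ?q y \<le> ?q u"
    using continuous_attains_sup[OF compact_sphere ne continuous_quad] by blast
  define M where "M = ?q u"
  have nu: "norm u = 1" using u by simp
  have bound: "?q y \<le> M * (norm y)\<^sup>2" for y
  proof (cases "y = 0")
    case True then show ?thesis by (simp add: linear_0[OF linear_Lop])
  next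
    case False
    define y1 where "y1 = (1 / norm y) *\<^sub>R y"
    have "y1 \<in> sphere 0 1" using False by (simp add: y1_def)
    then have "?q y1 \<le> M" using umax M_def by blast
    moreover have "?q y1 = ?q y / (norm y)\<^sup>2"
      unfolding y1_def quad_scale by (simp add: power_divide)
    ultimately show ?thesis using False by (simp add: divide_le_eq mult.commute)
  qed
  define N where "N z = M *\<^sub>R z - ?L z" for z
  have linN: "linear N" unfolding N_def[abs_def]
    by (intro linear_compose_sub linear_scaleR linear_Lop)
  have symN: "inner (N x) y = inner x (N y)" for x y
    using inner_Lop[OF adj, of x y] by (simp add: N_def inner_diff_left inner_diff_right)
  have psdN: "0 \<le> inner x (N x)" for x
    using bound[of x] by (simp add: N_def inner_diff_right power2_norm_eq_inner)
  have "inner u (N u) = 0" using nu by (simp add: N_def inner_diff_right M_def power2_norm_eq_inner[symmetric])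
  then have "N u = 0" by (rule psd_kernel[OF linN symN psdN])
  then have "?L u = M *\<^sub>R u" by (simp add: N_def)
  moreover have "u \<noteq> 0" using nu by auto
  ultimately have "is_eigenvalue (laplacian A) M" by (rule eig_extract)
  then have "M \<le> rho (laplacian A)"
    unfolding rho_def using eig_finite[OF lap_sym_all[OF adj]] by (intro Max_ge) auto
  moreover have "0 \<le> M" unfolding M_def by (rule quad_Lop_nonneg[OF adj])
  ultimately show ?thesis using bound[of z]
    by (meson mult_right_mono order_trans zero_le_power2)
qed

lemma sum_axis: "(\<Sum>l\<in>UNIV. axis i v $ l) = (v::'a::real_vector)"
proof -
  have "(\<Sum>l\<in>UNIV. axis i v $ l) = (\<Sum>l\<in>UNIV. if l = i then v else 0)"
    by (rule sum.cong) (auto simp: axis_def)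
  then show ?thesis by simp
qed

lemma Kop_eq_self: "Hop u = 0 \<Longrightarrow> Kop u = u" by (simp add: Kop_def)

lemma quad_Kop: fixes z :: "('a::real_inner)^'n" assumes adj: "sym_nonneg_adj A"
  shows "inner z (Lop (laplacian A) z) = inner (Kop z) (Lop (laplacian A) (Kop z))"
proof -
  have "inner z (Lop (laplacian A) z) = inner z (Kop (Lop (laplacian A) z))" by (simp add: Kop_Lop[OF adj])
  also have "\<dots> = inner (Kop z) (Lop (laplacian A) z)" by (simp add: inner_Kop)
  finally show ?thesis by (simp add: Lop_Kop)
qed

lemma inner_self_Kop: "inner z (Kop z) = (norm (Kop z))\<^sup>2" for z :: "('a::real_inner)^'n"
proof -
  have "inner z (Kop z) = inner z (Kop (Kop z))" by (simp add: Kop_Kop)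
  also have "\<dots> = inner (Kop z) (Kop z)" by (simp add: inner_Kop)
  finally show ?thesis by (simp add: power2_norm_eq_inner)
qed

lemma spec_lower:
  fixes z :: "(real^'p)^'n"
  assumes adj: "sym_nonneg_adj A" and con: "graph_connected A" and n2: "2 \<le> CARD('n)"
  shows "rho2 (laplacian A) * (norm (Kop z))\<^sup>2 \<le> inner z (Lop (laplacian A) z) \<and> 0 < rho2 (laplacian A)"
proof -
  let ?L = "Lop (laplacian A) :: (real^'p)^'n \<Rightarrow> _"
  let ?q = "\<lambda>z. inner z (?L z)"
  define S where "S = sphere (0::(real^'p)^'n) 1 \<inter> {u. Hop u = 0}"
  have clH: "closed {u::(real^'p)^'n. Hop u = 0}"
  proof -
    have "bounded_linear (Hop :: (real^'p)^'n \<Rightarrow> _)"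
      using linear_Hop linear_conv_bounded_linear by blast
    then have "continuous_on UNIV (Hop :: (real^'p)^'n \<Rightarrow> _)" by (rule linear_continuous_on)
    then show ?thesis by (intro closed_Collect_eq continuous_on_const)
  qed
  have cS: "compact S" unfolding S_def by (intro compact_Int_closed compact_sphere clH)
  obtain i j :: 'n where ij: "i \<noteq> j"
  proof -
    have "\<exists>i j::'n. i \<noteq> j"
    proof (rule ccontr)
      assume "\<not> ?thesis"
      then have "(UNIV::'n set) \<subseteq> {undefined}" by auto
      then have "CARD('n) \<le> card {undefined::'n}" by (intro card_mono) auto
      then show False using n2 by simp
    qed
    then show ?thesis using that by blast
  qed
  define b where "b = (axis undefined (1::real) :: real^'p)"
  define u0 where "u0 = (axis i b - axis j b :: (real^'p)^'n)"
  have Hu0: "Hop u0 = 0"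
    by (simp add: u0_def vec_eq_iff Hop_nth sum_subtractf sum_axis)
  have u0ne: "u0 \<noteq> 0"
  proof
    assume "u0 = 0"
    then have "u0 $ i = 0" by simp
    then have "\<forall>k. (if k = (undefined::'p) then (1::real) else 0) = 0"
      using ij by (simp add: u0_def b_def axis_def vec_eq_iff)
    then show False by (metis one_neq_zero)
  qed
  define u1 where "u1 = (1 / norm u0) *\<^sub>R u0"
  have "u1 \<in> S" using u0ne Hu0
    by (simp add: S_def u1_def linear_scale[OF linear_Hop])
  then have ne: "S \<noteq> {}" by blast
  obtain u where uS: "u \<in> S" and umin: "\<And>y. y \<in> S \<Longrightarrow> ?q u \<le> ?q y"
    using continuous_attains_inf[OF cS ne continuous_quad] by blast
  define m where "m = ?q u"
  have nu: "norm u = 1" and Hu: "Hop u = 0" using uS by (auto simp: S_def)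
  have bound0: "m * (norm y)\<^sup>2 \<le> ?q y" if Hy: "Hop y = 0" for y
  proof (cases "y = 0")
    case True then show ?thesis by (simp add: linear_0[OF linear_Lop])
  next
    case False
    define y1 where "y1 = (1 / norm y) *\<^sub>R y"
    have "y1 \<in> S" using False Hy by (simp add: S_def y1_def linear_scale[OF linear_Hop])
    then have "m \<le> ?q y1" using umin m_def by blast
    moreover have "?q y1 = ?q y / (norm y)\<^sup>2"
      unfolding y1_def quad_scale by (simp add: power_divide)
    ultimately show ?thesis using False by (simp add: le_divide_eq mult.commute)
  qed
  have bound: "m * (norm (Kop y))\<^sup>2 \<le> ?q y" for y
    using bound0[of "Kop y"] by (simp add: Hop_Kop quad_Kop[OF adj, of y])
  define N where "N z = ?L z - m *\<^sub>R Kop z" for z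
  have linN: "linear N" unfolding N_def[abs_def]
    by (intro linear_compose_sub linear_compose_scale_right linear_Lop linear_Kop)
  have symN: "inner (N x) y = inner x (N y)" for x y
    using inner_Lop[OF adj, of x y] inner_Kop[of x y]
    by (simp add: N_def inner_diff_left inner_diff_right)
  have psdN: "0 \<le> inner x (N x)" for x
    using bound[of x] by (simp add: N_def inner_diff_right inner_self_Kop)
  have Ku: "Kop u = u" by (rule Kop_eq_self[OF Hu])
  have "inner u (N u) = 0" using nu Ku
    by (simp add: N_def inner_diff_right m_def power2_norm_eq_inner[symmetric])
  then have "N u = 0" by (rule psd_kernel[OF linN symN psdN])
  then have Lu: "?L u = m *\<^sub>R u" by (simp add: N_def Ku)
  have une: "u \<noteq> 0" using nu by auto
  have eig: "is_eigenvalue (laplacian A) m" by (rule eig_extract[OF Lu une])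
  have "0 \<le> m" unfolding m_def by (rule quad_Lop_nonneg[OF adj])
  moreover have "m \<noteq> 0"
  proof
    assume "m = 0"
    then have "?L u = 0" using Lu by simp
    then have "Kop u = 0" by (rule Lop_zero_Kop[OF adj con])
    then show False using Ku une by simp
  qed
  ultimately have mpos: "0 < m" by simp
  define P where "P = {lam. is_eigenvalue (laplacian A) lam \<and> 0 < lam}"
  have finP: "finite P" unfolding P_def
    by (rule finite_subset[OF _ eig_finite[OF lap_sym_all[OF adj]]]) auto
  have mP: "m \<in> P" using eig mpos by (simp add: P_def)
  have r2m: "rho2 (laplacian A) \<le> m" unfolding rho2_def P_def[symmetric] using finP mP by (rule Min_le)
  have "rho2 (laplacian A) \<in> P" unfolding rho2_def P_def[symmetric] using finP mP by (intro Min_in) auto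
  then have r2pos: "0 < rho2 (laplacian A)" by (simp add: P_def)
  have "rho2 (laplacian A) * (norm (Kop z))\<^sup>2 \<le> m * (norm (Kop z))\<^sup>2"
    using r2m by (simp add: mult_right_mono)
  also have "\<dots> \<le> ?q z" by (rule bound)
  finally show ?thesis using r2pos by simp
qed

lemma spec_op:
  fixes z :: "(real^'p)^'n"
  assumes adj: "sym_nonneg_adj A"
  shows "(norm (Lop (laplacian A) z))\<^sup>2 \<le> (rho (laplacian A))\<^sup>2 * (norm z)\<^sup>2"
proof -
  let ?L = "Lop (laplacian A) :: (real^'p)^'n \<Rightarrow> _"
  let ?r = "rho (laplacian A)"
  define w where "w = ?L z"
  have cs: "(inner w (?L z))\<^sup>2 \<le> inner w (?L w) * inner z (?L z)"
    by (rule psd_cs[OF linear_Lop inner_Lop[OF adj] quad_Lop_nonneg[OF adj]])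
  have e: "inner w (?L z) = (norm w)\<^sup>2" by (simp add: w_def power2_norm_eq_inner)
  have r0: "0 \<le> ?r" using spec_upper[OF adj, of z] by simp
  have "inner w (?L w) * inner z (?L z) \<le> (?r * (norm w)\<^sup>2) * (?r * (norm z)\<^sup>2)"
    using spec_upper[OF adj, of w] spec_upper[OF adj, of z] quad_Lop_nonneg[OF adj, of w] quad_Lop_nonneg[OF adj, of z]
    by (intro mult_mono) auto
  with cs e have "((norm w)\<^sup>2)\<^sup>2 \<le> (?r\<^sup>2 * (norm z)\<^sup>2) * (norm w)\<^sup>2"
    by (simp add: algebra_simps power2_eq_square)
  then show ?thesis
  proof (cases "norm w = 0")
    case True then show ?thesis by (simp add: w_def)
  next
    case False
    then have "0 < (norm w)\<^sup>2" by simp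
    then have "(norm w)\<^sup>2 \<le> ?r\<^sup>2 * (norm z)\<^sup>2"
      using \<open>((norm w)\<^sup>2)\<^sup>2 \<le> _\<close> by (simp add: power2_eq_square mult_le_cancel_right)
    then show ?thesis by (simp add: w_def)
  qed
qed

lemma Q_exists:
  assumes adj: "sym_nonneg_adj A" and con: "graph_connected A" and n2: "2 \<le> CARD('n)"
  shows "\<exists>Q :: (real^'p)^'n \<Rightarrow> (real^'p)^'n. linear Q \<and>
    (\<forall>x y. inner (Q x) y = inner x (Q y)) \<and> (\<forall>x. 0 \<le> inner x (Q x)) \<and>
    (\<forall>x. Q (Lop (laplacian A) x) = Kop x) \<and>
    (\<forall>x. inner x (Q x) \<le> (norm (Kop x))\<^sup>2 / rho2 (laplacian A))"
proof -
  let ?L = "Lop (laplacian A) :: (real^'p)^'n \<Rightarrow> _"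
  define F where "F z = ?L z + Hop z" for z
  have linF: "linear F" unfolding F_def[abs_def] by (intro linear_compose_add linear_Lop linear_Hop)
  have HF: "Hop (F z) = Hop z" for z
    by (simp add: F_def linear_add[OF linear_Hop] Hop_Lop[OF adj] Hop_Hop)
  have "inj F"
  proof (rule linear_injective_0[OF linF, THEN iffD2], intro allI impI)
    fix z assume Fz: "F z = 0"
    then have Hz: "Hop z = 0" using HF[of z] by (simp add: linear_0[OF linear_Hop])
    then have "?L z = 0" using Fz by (simp add: F_def)
    then have "Kop z = 0" by (rule Lop_zero_Kop[OF adj con])
    then show "z = 0" using Hz by (simp add: Kop_def)
  qed
  then obtain Fi where linFi: "linear Fi" and FiF: "\<And>x. Fi (F x) = x" and FFi: "\<And>x. F (Fi x) = x"
    using linF linear_injective_isomorphism by blast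
  define Q where "Q x = Fi (Kop x)" for x
  have linQ: "linear Q" unfolding Q_def[abs_def] by (intro linear_compose[OF linear_Kop linFi, unfolded o_def])
  have HQ: "Hop (Q x) = 0" for x
    using HF[of "Q x"] FFi[of "Kop x"] by (simp add: Q_def Hop_Kop)
  have KQ: "Kop (Q x) = Q x" for x by (rule Kop_eq_self[OF HQ])
  have LQ: "?L (Q x) = Kop x" for x
    using FFi[of "Kop x"] HQ[of x] by (simp add: F_def Q_def)
  have inQ: "inner x (Q x') = inner (?L (Q x)) (Q x')" for x x'
  proof -
    have "inner x (Q x') = inner x (Kop (Q x'))" by (simp add: KQ)
    also have "\<dots> = inner (Kop x) (Q x')" by (simp add: inner_Kop)
    finally show ?thesis by (simp add: LQ)
  qed
  have sym: "inner (Q x) y = inner x (Q y)" for x y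
  proof -
    have "inner x (Q y) = inner (?L (Q x)) (Q y)" by (rule inQ)
    also have "\<dots> = inner (Q x) (?L (Q y))" by (rule inner_Lop[OF adj])
    also have "\<dots> = inner (?L (Q y)) (Q x)" by (simp add: inner_commute)
    also have "\<dots> = inner y (Q x)" by (rule inQ[symmetric])
    finally show ?thesis by (simp add: inner_commute)
  qed
  have tx: "inner x (Q x) = inner (Q x) (?L (Q x))" for x
    using inQ[of x x] by (simp add: inner_commute)
  have psd: "0 \<le> inner x (Q x)" for x
    unfolding tx by (rule quad_Lop_nonneg[OF adj])
  have QL: "Q (?L x) = Kop x" for x
  proof -
    have "?L (Q (?L x) - x) = 0"
      using LQ[of "?L x"] by (simp add: linear_diff[OF linear_Lop] Kop_Lop[OF adj])
    then have "Kop (Q (?L x) - x) = 0" by (rule Lop_zero_Kop[OF adj con])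
    then have "Kop (Q (?L x)) = Kop x" by (simp add: linear_diff[OF linear_Kop])
    then show ?thesis by (simp add: KQ)
  qed
  have up: "inner x (Q x) \<le> (norm (Kop x))\<^sup>2 / rho2 (laplacian A)" for x
  proof -
    define s where "s = Q x"
    define t where "t = inner x (Q x)"
    define r where "r = rho2 (laplacian A)"
    have r2: "0 < r" using spec_lower[OF adj con n2, of s] by (simp add: r_def)
    have t0: "0 \<le> t" unfolding t_def by (rule psd)
    have ts: "t = inner s (?L s)" unfolding t_def s_def by (rule tx)
    have Ks: "Kop s = s" unfolding s_def by (rule KQ)
    have A: "r * (norm s)\<^sup>2 \<le> t"
    proof -
      have "r * (norm (Kop s))\<^sup>2 \<le> inner s (?L s)"
        using spec_lower[OF adj con n2, of s] by (simp add: r_def)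
      then show ?thesis by (simp only: Ks ts)
    qed
    have nLs: "norm (?L s) = norm (Kop x)" unfolding s_def by (simp only: LQ)
    have B: "t \<le> norm s * norm (Kop x)"
      unfolding ts nLs[symmetric] by (rule norm_cauchy_schwarz)
    show ?thesis
    proof (cases "t = 0")
      case True then show ?thesis using r2 by (simp add: t_def r_def)
    next
      case False
      then have tp: "0 < t" using t0 by simp
      have "t\<^sup>2 \<le> (norm s * norm (Kop x))\<^sup>2" by (rule power_mono[OF B t0])
      also have "\<dots> = (norm s)\<^sup>2 * (norm (Kop x))\<^sup>2" by (simp add: power_mult_distrib)
      also have "\<dots> \<le> (t / r) * (norm (Kop x))\<^sup>2"
      proof (rule mult_right_mono)
        show "(norm s)\<^sup>2 \<le> t / r" using A r2 by (simp add: le_divide_eq mult.commute)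
      qed simp
      finally have "t * t \<le> t * ((norm (Kop x))\<^sup>2 / r)" by (simp add: power2_eq_square)
      then have "t \<le> (norm (Kop x))\<^sup>2 / r" using tp by (simp only: mult_le_cancel_left_pos)
      then show ?thesis by (simp add: t_def r_def)
    qed
  qed
  show ?thesis using linQ sym psd QL up by blast
qed

section \<open>Descent lemma\<close>

lemma smooth_descent:
  fixes F :: "'a::real_inner \<Rightarrow> real" and G :: "'a \<Rightarrow> 'a"
  assumes der: "\<And>y. (F has_derivative (\<lambda>h. G y \<bullet> h)) (at y)"
    and lip: "\<And>y z. norm (G y - G z) \<le> Lf * norm (y - z)" and Lf0: "0 \<le> Lf"
  shows "F y \<le> F x + G x \<bullet> (y - x) + Lf * (norm (y - x))\<^sup>2"
proof -
  define d where "d = y - x"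
  define phi where "phi t = F (x + t *\<^sub>R d)" for t :: real
  have dphi: "(phi has_derivative (\<lambda>s. G (x + t *\<^sub>R d) \<bullet> (s *\<^sub>R d))) (at t within {0..1})" for t
  proof -
    have "((\<lambda>t. x + t *\<^sub>R d) has_derivative (\<lambda>s. s *\<^sub>R d)) (at t within {0..1})"
      by (auto intro!: derivative_eq_intros)
    from has_derivative_in_compose[OF this der[THEN has_derivative_at_withinI]]
    show ?thesis unfolding phi_def o_def by simp
  qed
  obtain s where s: "s \<in> {0<..<1}" and eq: "phi 1 - phi 0 = G (x + s *\<^sub>R d) \<bullet> ((1 - 0) *\<^sub>R d)"
    using mvt_simple[of 0 1 phi, OF zero_less_one dphi] by blast
  have "G (x + s *\<^sub>R d) \<bullet> d = G x \<bullet> d + (G (x + s *\<^sub>R d) - G x) \<bullet> d"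
    by (simp add: inner_diff_left)
  also have "(G (x + s *\<^sub>R d) - G x) \<bullet> d \<le> norm (G (x + s *\<^sub>R d) - G x) * norm d"
    by (rule norm_cauchy_schwarz)
  also have "norm (G (x + s *\<^sub>R d) - G x) \<le> Lf * norm d"
  proof -
    have "norm (G (x + s *\<^sub>R d) - G x) \<le> Lf * norm (s *\<^sub>R d)" using lip[of "x + s *\<^sub>R d" x] by simp
    also have "\<dots> \<le> Lf * norm d" using s Lf0
      by (intro mult_left_mono) (auto intro: mult_left_le_one_le)
    finally show ?thesis .
  qed
  then have "norm (G (x + s *\<^sub>R d) - G x) * norm d \<le> Lf * norm d * norm d"
    by (intro mult_right_mono) auto
  finally have "G (x + s *\<^sub>R d) \<bullet> d \<le> G x \<bullet> d + Lf * (norm d)\<^sup>2"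
    by (simp add: power2_eq_square mult.assoc)
  moreover have "phi 1 = F y" "phi 0 = F x" by (simp_all add: phi_def d_def)
  ultimately show ?thesis using eq by (simp add: d_def)
qed

lemma young_inner:
  fixes x y :: "'a::real_inner"
  assumes c: "0 < c"
  shows "inner x y \<le> (c / 2) * (norm x)\<^sup>2 + (1 / (2 * c)) * (norm y)\<^sup>2"
proof -
  have "0 \<le> (norm (c *\<^sub>R x - y))\<^sup>2" by simp
  also have "\<dots> = inner (c *\<^sub>R x - y) (c *\<^sub>R x - y)" by (simp only: power2_norm_eq_inner)
  also have "\<dots> = c\<^sup>2 * inner x x - 2 * c * inner x y + inner y y"
    by (simp add: inner_diff_left inner_diff_right inner_commute[of y x] power2_eq_square algebra_simps)
  also have "\<dots> = c\<^sup>2 * (norm x)\<^sup>2 - 2 * c * inner x y + (norm y)\<^sup>2"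
    by (simp only: power2_norm_eq_inner)
  finally have "2 * c * inner x y \<le> c\<^sup>2 * (norm x)\<^sup>2 + (norm y)\<^sup>2" by simp
  then have "inner x y \<le> (c\<^sup>2 * (norm x)\<^sup>2 + (norm y)\<^sup>2) / (2 * c)"
    using c by (simp add: le_divide_eq mult.commute mult.left_commute)
  also have "\<dots> = (c / 2) * (norm x)\<^sup>2 + (1 / (2 * c)) * (norm y)\<^sup>2"
    using c by (simp add: field_simps power2_eq_square)
  finally show ?thesis .
qed

lemma norm_add_sq_le:
  fixes x y :: "'a::real_inner"
  assumes s: "0 < s"
  shows "(norm (x + y))\<^sup>2 \<le> (1 + s) * (norm x)\<^sup>2 + (1 + 1 / s) * (norm y)\<^sup>2"
proof -
  have "(norm (x + y))\<^sup>2 = (norm x)\<^sup>2 + 2 * inner x y + (norm y)\<^sup>2"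
    by (simp add: power2_norm_eq_inner inner_add_left inner_add_right inner_commute)
  also have "inner x y \<le> (s / 2) * (norm x)\<^sup>2 + (1 / (2 * s)) * (norm y)\<^sup>2" by (rule young_inner[OF s])
  then have "2 * inner x y \<le> s * (norm x)\<^sup>2 + (1 / s) * (norm y)\<^sup>2" by (simp add: field_simps)
  finally show ?thesis by (simp add: algebra_simps)
qed

lemma norm_add4_sq_le:
  fixes x1 x2 x3 x4 :: "'a::real_inner"
  shows "(norm (x1 + x2 + x3 + x4))\<^sup>2 \<le> (10/3) * (norm x1)\<^sup>2 + 4 * (norm x2)\<^sup>2 + 5 * (norm x3)\<^sup>2 + 4 * (norm x4)\<^sup>2"
proof -
  have e: "x1 + x2 + x3 + x4 = (x1 + x3) + (x2 + x4)" by (simp add: algebra_simps)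
  have "(norm ((x1 + x3) + (x2 + x4)))\<^sup>2 \<le> 2 * (norm (x1 + x3))\<^sup>2 + 2 * (norm (x2 + x4))\<^sup>2"
    using norm_add_sq_le[of 1 "x1 + x3" "x2 + x4"] by simp
  moreover have "(norm (x1 + x3))\<^sup>2 \<le> (5/3) * (norm x1)\<^sup>2 + (5/2) * (norm x3)\<^sup>2"
    using norm_add_sq_le[of "2/3" x1 x3] by simp
  moreover have "(norm (x2 + x4))\<^sup>2 \<le> 2 * (norm x2)\<^sup>2 + 2 * (norm x4)\<^sup>2"
    using norm_add_sq_le[of 1 x2 x4] by simp
  ultimately show ?thesis unfolding e by linarith
qed

lemma psd_add_le:
  fixes Q :: "'a::real_inner \<Rightarrow> 'a"
  assumes lin: "linear Q" and sym: "\<And>x y. inner (Q x) y = inner x (Q y)" and psd: "\<And>x. 0 \<le> inner x (Q x)"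
  shows "inner (p + q) (Q (p + q)) \<le> 2 * inner p (Q p) + 2 * inner q (Q q)"
proof -
  have "0 \<le> inner (p - q) (Q (p - q))" by (rule psd)
  moreover have "inner (p - q) (Q (p - q)) = inner p (Q p) - 2 * inner p (Q q) + inner q (Q q)"
    using sym[of q p] sym[of p q] by (simp add: linear_diff[OF lin] inner_diff_left inner_diff_right inner_commute[of q "Q p"])
  moreover have "inner (p + q) (Q (p + q)) = inner p (Q p) + 2 * inner p (Q q) + inner q (Q q)"
    using sym[of q p] sym[of p q] by (simp add: linear_add[OF lin] inner_add_left inner_add_right inner_commute[of q "Q p"])
  ultimately show ?thesis by linarith
qed

section \<open>One-step core\<close>

lemma nsq_diff: "(norm (x - y))\<^sup>2 = (norm x)\<^sup>2 - 2 * inner x y + (norm (y::'a::real_inner))\<^sup>2"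
  by (simp add: power2_norm_eq_inner inner_diff_left inner_diff_right inner_commute[of y x])
lemma nsq_add: "(norm (x + y))\<^sup>2 = (norm x)\<^sup>2 + 2 * inner x y + (norm (y::'a::real_inner))\<^sup>2"
  by (simp add: power2_norm_eq_inner inner_add_left inner_add_right inner_commute[of y x])
lemma nsq_scale: "(norm (c *\<^sub>R (x::'a::real_normed_vector)))\<^sup>2 = c\<^sup>2 * (norm x)\<^sup>2"
  by (simp add: power_mult_distrib)

lemma V_diff:
  fixes a b u w :: "'v::real_inner" and Q :: "'v \<Rightarrow> 'v"
  assumes linQ: "linear Q" and symQ: "\<And>x y. inner (Q x) y = inner x (Q y)" and bne: "beta \<noteq> 0"
  shows "((1/2) * (norm (a - eta *\<^sub>R u))\<^sup>2 + (1/2) * inner (b + w) (Q (b + w)) + alpha/(2*beta) * (norm (b + w))\<^sup>2 + inner (a - eta *\<^sub>R u) (b + w) + F')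
       - ((1/2) * (norm a)\<^sup>2 + (1/2) * inner b (Q b) + alpha/(2*beta) * (norm b)\<^sup>2 + inner a b + F)
       = (- eta * inner a u - eta * inner u b + inner (Q b) w + (alpha/beta) * inner b w + inner a w)
         + ((1/2) * (norm (eta *\<^sub>R u - w))\<^sup>2 + (1/2) * inner w (Q w) + ((alpha - beta)/(2*beta)) * (norm w)\<^sup>2)
         + (F' - F)"
proof -
  have s1: "inner w (Q b) = inner (Q b) w" by (simp add: inner_commute)
  have s2: "inner b (Q w) = inner (Q b) w" by (simp add: symQ)
  have e1: "(norm (a - eta *\<^sub>R u))\<^sup>2 = (norm a)\<^sup>2 - 2 * eta * inner a u + eta\<^sup>2 * (norm u)\<^sup>2"
    unfolding nsq_diff nsq_scale by simp
  have e2: "inner (b + w) (Q (b + w)) = inner b (Q b) + 2 * inner (Q b) w + inner w (Q w)"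
    by (simp add: linear_add[OF linQ] inner_add_left inner_add_right s1 s2)
  have e3: "(norm (b + w))\<^sup>2 = (norm b)\<^sup>2 + 2 * inner b w + (norm w)\<^sup>2"
    by (simp add: power2_norm_eq_inner inner_add_left inner_add_right inner_commute[of w b])
  have e4: "inner (a - eta *\<^sub>R u) (b + w) = inner a b + inner a w - eta * inner u b - eta * inner u w"
    by (simp add: inner_diff_left inner_add_right algebra_simps)
  have e5: "(norm (eta *\<^sub>R u - w))\<^sup>2 = eta\<^sup>2 * (norm u)\<^sup>2 - 2 * eta * inner u w + (norm w)\<^sup>2"
    unfolding nsq_diff nsq_scale by simp
  have e6: "(alpha - beta)/(2*beta) = alpha/(2*beta) - 1/2" using bne by (simp add: field_simps)
  have e7: "alpha/(2*beta) * (2 * inner b w) = (alpha/beta) * inner b w" using bne by (simp add: field_simps)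
  show ?thesis unfolding e1 e2 e3 e4 e5 e6 using e7 by (simp add: algebra_simps)
qed

lemma psd_cross:
  fixes Q :: "'a::real_inner \<Rightarrow> 'a"
  assumes lin: "linear Q" and sym: "\<And>x y. inner (Q x) y = inner x (Q y)" and psd: "\<And>x. 0 \<le> inner x (Q x)"
  shows "2 * inner (Q x) y \<le> inner x (Q x) + inner y (Q y)"
proof -
  have "0 \<le> inner (x - y) (Q (x - y))" by (rule psd)
  moreover have "inner (x - y) (Q (x - y)) = inner x (Q x) - 2 * inner (Q x) y + inner y (Q y)"
    using sym[of x y] sym[of y x] by (simp add: linear_diff[OF lin] inner_diff_left inner_diff_right inner_commute[of y "Q x"])
  ultimately show ?thesis by linarith
qed

lemma step_core:
  fixes a b l d Dl hg hg0 :: "'v::real_inner" and Q :: "'v \<Rightarrow> 'v"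
    and eta alpha beta r2 rho Lf F F' :: real
  assumes pos: "0 < eta" "0 < beta" "beta < alpha" "0 < r2" "0 \<le> rho" "0 < Lf"
    and linQ: "linear Q" and symQ: "\<And>x y. inner (Q x) y = inner x (Q y)" and psdQ: "\<And>x. 0 \<le> inner x (Q x)"
    and Ql: "Q l = a"
    and Qb: "inner b (Q b) \<le> (norm b)\<^sup>2 / r2"
    and QD: "inner Dl (Q Dl) \<le> (norm Dl)\<^sup>2 / r2"
    and al_lo: "r2 * (norm a)\<^sup>2 \<le> inner a l"
    and al_hi: "inner a l \<le> rho * (norm a)\<^sup>2"
    and l_hi: "(norm l)\<^sup>2 \<le> rho\<^sup>2 * (norm a)\<^sup>2"
    and dn: "norm d \<le> Lf * norm a"
    and Dn: "norm Dl \<le> eta * Lf * norm hg"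
    and gn: "norm (hg - hg0) \<le> Lf * norm a"
    and Fs: "F' - F \<le> - eta * inner hg0 hg + eta\<^sup>2 * Lf * (norm hg)\<^sup>2"
  defines "u \<equiv> alpha *\<^sub>R l + beta *\<^sub>R b + d"
    and "w \<equiv> (eta * beta) *\<^sub>R l + (1/beta) *\<^sub>R Dl"
    and "e1 \<equiv> (alpha - beta) * r2 - (1 / 2) * (2 + 3 * Lf\<^sup>2)"
    and "e2 \<equiv> beta\<^sup>2 * rho + (2 * alpha\<^sup>2 + beta\<^sup>2) * rho\<^sup>2 + (5 / 2) * Lf\<^sup>2"
    and "e3 \<equiv> beta - 1 / 2 - alpha / (2 * beta\<^sup>2) - 1 / (2 * beta * r2)"
    and "e4 \<equiv> 2 * beta\<^sup>2 + 1 / 2"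
    and "e5 \<equiv> 1 / 4 - (1 / (2 * beta)) * (1 / beta + 1 / r2 + alpha / beta) * Lf\<^sup>2"
    and "e6 \<equiv> (1 / beta\<^sup>2) * (1 + 1 / r2 + alpha / beta) * Lf\<^sup>2 + Lf * (1 + Lf) / 2"
  shows "((1/2) * (norm (a - eta *\<^sub>R u))\<^sup>2 + (1/2) * inner (b + w) (Q (b + w)) + alpha/(2*beta) * (norm (b + w))\<^sup>2 + inner (a - eta *\<^sub>R u) (b + w) + F')
       - ((1/2) * (norm a)\<^sup>2 + (1/2) * inner b (Q b) + alpha/(2*beta) * (norm b)\<^sup>2 + inner a b + F)
     \<le> (- eta * e1 + eta\<^sup>2 * e2) * (norm a)\<^sup>2 + (- eta * e3 + eta\<^sup>2 * e4) * (norm b)\<^sup>2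
       + (- eta * (1/4 + e5) + eta\<^sup>2 * (e6 + Lf / 2 - Lf\<^sup>2 / 2)) * (norm hg)\<^sup>2 - eta / 2 * (norm hg0)\<^sup>2"
proof -
  have bne: "beta \<noteq> 0" using pos by simp
  define A where "A = (norm a)\<^sup>2"
  define B where "B = (norm b)\<^sup>2"
  define G where "G = (norm hg)\<^sup>2"
  define G0 where "G0 = (norm hg0)\<^sup>2"
  define D where "D = (norm Dl)\<^sup>2"
  have A0: "0 \<le> A" and B0: "0 \<le> B" and G0': "0 \<le> G" by (simp_all add: A_def B_def G_def)
  have DG: "D \<le> eta\<^sup>2 * Lf\<^sup>2 * G"
  proof -
    have "D \<le> (eta * Lf * norm hg)\<^sup>2" unfolding D_def by (rule power_mono[OF Dn norm_ge_zero])
    then show ?thesis by (simp add: G_def power_mult_distrib)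
  qed
  have dA: "(norm d)\<^sup>2 \<le> Lf\<^sup>2 * A"
  proof -
    have "(norm d)\<^sup>2 \<le> (Lf * norm a)\<^sup>2" by (rule power_mono[OF dn norm_ge_zero])
    then show ?thesis by (simp add: A_def power_mult_distrib)
  qed
  have gA: "(norm (hg - hg0))\<^sup>2 \<le> Lf\<^sup>2 * A"
  proof -
    have "(norm (hg - hg0))\<^sup>2 \<le> (Lf * norm a)\<^sup>2" by (rule power_mono[OF gn norm_ge_zero])
    then show ?thesis by (simp add: A_def power_mult_distrib)
  qed
  have lA: "(norm l)\<^sup>2 \<le> rho\<^sup>2 * A" using l_hi by (simp add: A_def)
  have ID: "((1/2) * (norm (a - eta *\<^sub>R u))\<^sup>2 + (1/2) * inner (b + w) (Q (b + w)) + alpha/(2*beta) * (norm (b + w))\<^sup>2 + inner (a - eta *\<^sub>R u) (b + w) + F')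
       - ((1/2) * (norm a)\<^sup>2 + (1/2) * inner b (Q b) + alpha/(2*beta) * (norm b)\<^sup>2 + inner a b + F)
       = (- eta * inner a u - eta * inner u b + inner (Q b) w + (alpha/beta) * inner b w + inner a w)
         + ((1/2) * (norm (eta *\<^sub>R u - w))\<^sup>2 + (1/2) * inner w (Q w) + ((alpha - beta)/(2*beta)) * (norm w)\<^sup>2)
         + (F' - F)"
    by (rule V_diff[OF linQ symQ bne])
  have Qbl: "inner (Q b) l = inner a b" using symQ[of b l] Ql by (simp add: inner_commute)
  have T1: "- eta * inner a u - eta * inner u b + inner (Q b) w + (alpha/beta) * inner b w + inner a w
      = - eta * (alpha - beta) * inner a l - eta * beta * B - eta * inner a d - eta * inner d b
        + (1/beta) * inner (Q b) Dl + (alpha / beta\<^sup>2) * inner b Dl + (1/beta) * inner a Dl"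
    unfolding u_def w_def B_def
    using bne power2_norm_eq_inner[of b, unfolded power2_eq_square]
    by (simp add: inner_add_left inner_add_right Qbl inner_commute[of l b] inner_commute[of b a]
        power2_norm_eq_inner power2_eq_square field_simps)
  have P1: "- eta * (alpha - beta) * inner a l \<le> - (eta * (alpha - beta) * r2) * A"
  proof -
    have "eta * (alpha - beta) * (r2 * A) \<le> eta * (alpha - beta) * inner a l"
      using al_lo pos by (intro mult_left_mono) (auto simp: A_def)
    then show ?thesis by (simp add: algebra_simps)
  qed
  have P2: "- eta * inner a d \<le> (eta / 2) * A + (eta / 2 * Lf\<^sup>2) * A"
  proof -
    have "inner a (- d) \<le> (1/2) * (norm a)\<^sup>2 + (1 / (2 * 1)) * (norm (- d))\<^sup>2" by (rule young_inner) simp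
    then have "- inner a d \<le> (1/2) * A + (1/2) * Lf\<^sup>2 * A" using dA by (simp add: A_def)
    then have "eta * (- inner a d) \<le> eta * ((1/2) * A + (1/2) * Lf\<^sup>2 * A)" using pos by (intro mult_left_mono) auto
    then show ?thesis by (simp add: algebra_simps)
  qed
  have P3: "- eta * inner d b \<le> (eta / 2) * B + (eta / 2 * Lf\<^sup>2) * A"
  proof -
    have "inner b (- d) \<le> (1/2) * (norm b)\<^sup>2 + (1 / (2 * 1)) * (norm (- d))\<^sup>2" by (rule young_inner) simp
    then have "- inner d b \<le> (1/2) * B + (1/2) * Lf\<^sup>2 * A" using dA by (simp add: B_def inner_commute)
    then have "eta * (- inner d b) \<le> eta * ((1/2) * B + (1/2) * Lf\<^sup>2 * A)" using pos by (intro mult_left_mono) auto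
    then show ?thesis by (simp add: algebra_simps)
  qed
  have P4: "(1/beta) * inner (Q b) Dl \<le> (eta / (2 * beta * r2)) * B + (eta * Lf\<^sup>2 / (2 * beta * r2)) * G"
  proof -
    have "2 * inner (Q (eta *\<^sub>R b)) Dl \<le> inner (eta *\<^sub>R b) (Q (eta *\<^sub>R b)) + inner Dl (Q Dl)"
      by (rule psd_cross[OF linQ symQ psdQ])
    then have "2 * eta * inner (Q b) Dl \<le> eta\<^sup>2 * inner b (Q b) + inner Dl (Q Dl)"
      by (simp add: linear_scale[OF linQ] power2_eq_square)
    also have "\<dots> \<le> eta\<^sup>2 * (B / r2) + D / r2"
      using Qb QD pos by (intro add_mono mult_left_mono) (auto simp: B_def D_def)
    also have "\<dots> \<le> eta\<^sup>2 * (B / r2) + eta\<^sup>2 * Lf\<^sup>2 * G / r2"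
      using DG pos by (simp add: divide_right_mono)
    finally have "2 * eta * inner (Q b) Dl \<le> eta\<^sup>2 * (B / r2) + eta\<^sup>2 * Lf\<^sup>2 * G / r2" .
    then have "eta * (2 * inner (Q b) Dl) \<le> eta * (eta * (B / r2) + eta * Lf\<^sup>2 * G / r2)"
      by (simp add: algebra_simps power2_eq_square)
    then have "2 * inner (Q b) Dl \<le> eta * (B / r2) + eta * Lf\<^sup>2 * G / r2"
      using pos by (simp only: mult_le_cancel_left_pos)
    then have "(1 / (2 * beta)) * (2 * inner (Q b) Dl) \<le> (1 / (2 * beta)) * (eta * (B / r2) + eta * Lf\<^sup>2 * G / r2)"
      using pos by (intro mult_left_mono) auto
    then show ?thesis using pos by (simp add: field_simps)
  qed
  have P5: "(alpha / beta\<^sup>2) * inner b Dl \<le> (eta * alpha / (2 * beta\<^sup>2)) * B + (eta * alpha * Lf\<^sup>2 / (2 * beta\<^sup>2)) * G"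
  proof -
    have "inner b Dl \<le> (eta / 2) * (norm b)\<^sup>2 + (1 / (2 * eta)) * (norm Dl)\<^sup>2" by (rule young_inner) (use pos in simp)
    also have "\<dots> \<le> (eta / 2) * B + (1 / (2 * eta)) * (eta\<^sup>2 * Lf\<^sup>2 * G)"
      using DG pos unfolding B_def D_def by (intro add_mono order_refl mult_left_mono) auto
    also have "\<dots> = (eta / 2) * B + (eta * Lf\<^sup>2 / 2) * G" using pos by (simp add: field_simps power2_eq_square)
    finally have "inner b Dl \<le> (eta / 2) * B + (eta * Lf\<^sup>2 / 2) * G" .
    then have "(alpha / beta\<^sup>2) * inner b Dl \<le> (alpha / beta\<^sup>2) * ((eta / 2) * B + (eta * Lf\<^sup>2 / 2) * G)"
      using pos by (intro mult_left_mono) auto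
    also have "(alpha / beta\<^sup>2) * ((eta / 2) * B + (eta * Lf\<^sup>2 / 2) * G) = (eta * alpha / (2 * beta\<^sup>2)) * B + (eta * alpha * Lf\<^sup>2 / (2 * beta\<^sup>2)) * G"
      using pos by (simp add: field_simps)
    finally show ?thesis .
  qed
  have P6: "(1/beta) * inner a Dl \<le> (eta / 2) * A + (eta * Lf\<^sup>2 / (2 * beta\<^sup>2)) * G"
  proof -
    have "inner a Dl \<le> (eta * beta / 2) * (norm a)\<^sup>2 + (1 / (2 * (eta * beta))) * (norm Dl)\<^sup>2"
      by (rule young_inner) (use pos in simp)
    also have "\<dots> \<le> (eta * beta / 2) * A + (1 / (2 * (eta * beta))) * (eta\<^sup>2 * Lf\<^sup>2 * G)"
      using DG pos unfolding A_def D_def by (intro add_mono order_refl mult_left_mono) auto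
    also have "\<dots> = (eta * beta / 2) * A + (eta * Lf\<^sup>2 / (2 * beta)) * G" using pos by (simp add: field_simps power2_eq_square)
    finally have "inner a Dl \<le> (eta * beta / 2) * A + (eta * Lf\<^sup>2 / (2 * beta)) * G" .
    then have "(1/beta) * inner a Dl \<le> (1/beta) * ((eta * beta / 2) * A + (eta * Lf\<^sup>2 / (2 * beta)) * G)"
      using pos by (intro mult_left_mono) auto
    also have "(1/beta) * ((eta * beta / 2) * A + (eta * Lf\<^sup>2 / (2 * beta)) * G) = (eta / 2) * A + (eta * Lf\<^sup>2 / (2 * beta\<^sup>2)) * G"
      using pos by (simp add: field_simps power2_eq_square)
    finally show ?thesis .
  qed
  have PF: "F' - F \<le> - (eta / 2) * G0 - (eta / 2) * G + (eta / 2 * Lf\<^sup>2) * A + (eta\<^sup>2 * Lf) * G"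
  proof -
    have "inner hg0 hg = (1/2) * G0 + (1/2) * G - (1/2) * (norm (hg - hg0))\<^sup>2"
      by (simp add: G0_def G_def nsq_diff inner_commute field_simps)
    then have "- inner hg0 hg \<le> - (1/2) * G0 - (1/2) * G + (1/2) * Lf\<^sup>2 * A" using gA by simp
    then have "eta * (- inner hg0 hg) \<le> eta * (- (1/2) * G0 - (1/2) * G + (1/2) * Lf\<^sup>2 * A)"
      using pos by (intro mult_left_mono) auto
    then show ?thesis using Fs by (simp add: G_def algebra_simps)
  qed
  have S1: "(1/2) * (norm (eta *\<^sub>R u - w))\<^sup>2 \<le> (5/3 * eta\<^sup>2 * (alpha - beta)\<^sup>2 * rho\<^sup>2) * A + (2 * eta\<^sup>2 * beta\<^sup>2) * B
      + (5/2 * eta\<^sup>2 * Lf\<^sup>2) * A + (2 * eta\<^sup>2 * Lf\<^sup>2 / beta\<^sup>2) * G"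
  proof -
    have e: "eta *\<^sub>R u - w = (eta * (alpha - beta)) *\<^sub>R l + (eta * beta) *\<^sub>R b + eta *\<^sub>R d + (- 1 / beta) *\<^sub>R Dl"
      unfolding u_def w_def by (simp add: algebra_simps)
    have "(norm (eta *\<^sub>R u - w))\<^sup>2 \<le> (10/3) * (norm ((eta * (alpha - beta)) *\<^sub>R l))\<^sup>2 + 4 * (norm ((eta * beta) *\<^sub>R b))\<^sup>2
        + 5 * (norm (eta *\<^sub>R d))\<^sup>2 + 4 * (norm ((- 1 / beta) *\<^sub>R Dl))\<^sup>2"
      unfolding e by (rule norm_add4_sq_le)
    also have "\<dots> = (10/3) * (eta * (alpha - beta))\<^sup>2 * (norm l)\<^sup>2 + 4 * (eta * beta)\<^sup>2 * B
        + 5 * eta\<^sup>2 * (norm d)\<^sup>2 + 4 * (1 / beta)\<^sup>2 * D"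
      by (simp add: power_mult_distrib B_def D_def power_divide)
    also have "\<dots> \<le> (10/3) * (eta * (alpha - beta))\<^sup>2 * (rho\<^sup>2 * A) + 4 * (eta * beta)\<^sup>2 * B
        + 5 * eta\<^sup>2 * (Lf\<^sup>2 * A) + 4 * (1 / beta)\<^sup>2 * (eta\<^sup>2 * Lf\<^sup>2 * G)"
      by (intro add_mono mult_left_mono lA dA DG order_refl) auto
    finally have n4: "(norm (eta *\<^sub>R u - w))\<^sup>2 \<le> (10/3) * (eta * (alpha - beta))\<^sup>2 * (rho\<^sup>2 * A) + 4 * (eta * beta)\<^sup>2 * B
        + 5 * eta\<^sup>2 * (Lf\<^sup>2 * A) + 4 * (1 / beta)\<^sup>2 * (eta\<^sup>2 * Lf\<^sup>2 * G)" .
    have eq: "(1/2) * ((10/3) * (eta * (alpha - beta))\<^sup>2 * (rho\<^sup>2 * A) + 4 * (eta * beta)\<^sup>2 * B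
        + 5 * eta\<^sup>2 * (Lf\<^sup>2 * A) + 4 * (1 / beta)\<^sup>2 * (eta\<^sup>2 * Lf\<^sup>2 * G))
        = (5/3 * eta\<^sup>2 * (alpha - beta)\<^sup>2 * rho\<^sup>2) * A + (2 * eta\<^sup>2 * beta\<^sup>2) * B
      + (5/2 * eta\<^sup>2 * Lf\<^sup>2) * A + (2 * eta\<^sup>2 * Lf\<^sup>2 / beta\<^sup>2) * G"
      unfolding power_mult_distrib using pos by (simp add: power_divide field_simps)
    have "(1/2) * (norm (eta *\<^sub>R u - w))\<^sup>2 \<le> (1/2) * ((10/3) * (eta * (alpha - beta))\<^sup>2 * (rho\<^sup>2 * A) + 4 * (eta * beta)\<^sup>2 * B
        + 5 * eta\<^sup>2 * (Lf\<^sup>2 * A) + 4 * (1 / beta)\<^sup>2 * (eta\<^sup>2 * Lf\<^sup>2 * G))"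
      using n4 by (rule mult_left_mono) simp
    then show ?thesis unfolding eq .
  qed
  have S2: "(1/2) * inner w (Q w) \<le> (eta\<^sup>2 * beta\<^sup>2 * rho) * A + (eta\<^sup>2 * Lf\<^sup>2 / (beta\<^sup>2 * r2)) * G"
  proof -
    have "inner w (Q w) \<le> 2 * inner ((eta * beta) *\<^sub>R l) (Q ((eta * beta) *\<^sub>R l)) + 2 * inner ((1/beta) *\<^sub>R Dl) (Q ((1/beta) *\<^sub>R Dl))"
      unfolding w_def by (rule psd_add_le[OF linQ symQ psdQ])
    also have "\<dots> = 2 * (eta * beta)\<^sup>2 * inner a l + 2 * (1/beta)\<^sup>2 * inner Dl (Q Dl)"
      by (simp add: linear_scale[OF linQ] Ql inner_commute[of l a] power2_eq_square)
    also have "\<dots> \<le> 2 * (eta * beta)\<^sup>2 * (rho * A) + 2 * (1/beta)\<^sup>2 * (eta\<^sup>2 * Lf\<^sup>2 * G / r2)"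
    proof (intro add_mono mult_left_mono)
      show "inner a l \<le> rho * A" using al_hi by (simp add: A_def)
      show "inner Dl (Q Dl) \<le> eta\<^sup>2 * Lf\<^sup>2 * G / r2"
        using QD DG pos by (simp add: D_def) (meson divide_right_mono less_eq_real_def order_trans)
    qed auto
    finally show ?thesis by (simp add: power_mult_distrib power_divide field_simps)
  qed
  have S3: "((alpha - beta)/(2*beta)) * (norm w)\<^sup>2 \<le> (eta\<^sup>2 * (alpha - beta) * beta * rho\<^sup>2) * A + (eta\<^sup>2 * (alpha - beta) * Lf\<^sup>2 / beta^3) * G"
  proof -
    have "(norm w)\<^sup>2 \<le> (1 + 1) * (norm ((eta * beta) *\<^sub>R l))\<^sup>2 + (1 + 1/1) * (norm ((1/beta) *\<^sub>R Dl))\<^sup>2"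
      unfolding w_def by (rule norm_add_sq_le) simp
    also have "\<dots> = 2 * (eta * beta)\<^sup>2 * (norm l)\<^sup>2 + 2 * (1/beta)\<^sup>2 * D"
      by (simp add: power_mult_distrib D_def power_divide)
    also have "\<dots> \<le> 2 * (eta * beta)\<^sup>2 * (rho\<^sup>2 * A) + 2 * (1/beta)\<^sup>2 * (eta\<^sup>2 * Lf\<^sup>2 * G)"
      by (intro add_mono mult_left_mono lA DG) auto
    finally have "(norm w)\<^sup>2 \<le> 2 * (eta * beta)\<^sup>2 * (rho\<^sup>2 * A) + 2 * (1/beta)\<^sup>2 * (eta\<^sup>2 * Lf\<^sup>2 * G)" .
    then have "((alpha - beta)/(2*beta)) * (norm w)\<^sup>2 \<le> ((alpha - beta)/(2*beta)) * (2 * (eta * beta)\<^sup>2 * (rho\<^sup>2 * A) + 2 * (1/beta)\<^sup>2 * (eta\<^sup>2 * Lf\<^sup>2 * G))"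
      using pos by (intro mult_left_mono) auto
    then show ?thesis using pos by (simp add: power_mult_distrib power_divide field_simps power3_eq_cube power2_eq_square)
  qed
  define TOT where "TOT = - (eta * (alpha - beta) * r2) * A - eta * beta * B
      + ((eta / 2) * A + (eta / 2 * Lf\<^sup>2) * A)
      + ((eta / 2) * B + (eta / 2 * Lf\<^sup>2) * A)
      + ((eta / (2 * beta * r2)) * B + (eta * Lf\<^sup>2 / (2 * beta * r2)) * G)
      + ((eta * alpha / (2 * beta\<^sup>2)) * B + (eta * alpha * Lf\<^sup>2 / (2 * beta\<^sup>2)) * G)
      + ((eta / 2) * A + (eta * Lf\<^sup>2 / (2 * beta\<^sup>2)) * G)
      + ((5/3 * eta\<^sup>2 * (alpha - beta)\<^sup>2 * rho\<^sup>2) * A + (2 * eta\<^sup>2 * beta\<^sup>2) * B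
      + (5/2 * eta\<^sup>2 * Lf\<^sup>2) * A + (2 * eta\<^sup>2 * Lf\<^sup>2 / beta\<^sup>2) * G)
      + ((eta\<^sup>2 * beta\<^sup>2 * rho) * A + (eta\<^sup>2 * Lf\<^sup>2 / (beta\<^sup>2 * r2)) * G)
      + ((eta\<^sup>2 * (alpha - beta) * beta * rho\<^sup>2) * A + (eta\<^sup>2 * (alpha - beta) * Lf\<^sup>2 / beta^3) * G)
      + (- (eta / 2) * G0 - (eta / 2) * G + (eta / 2 * Lf\<^sup>2) * A + (eta\<^sup>2 * Lf) * G)"
  have LE: "((1/2) * (norm (a - eta *\<^sub>R u))\<^sup>2 + (1/2) * inner (b + w) (Q (b + w)) + alpha/(2*beta) * (norm (b + w))\<^sup>2 + inner (a - eta *\<^sub>R u) (b + w) + F')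
       - ((1/2) * (norm a)\<^sup>2 + (1/2) * inner b (Q b) + alpha/(2*beta) * (norm b)\<^sup>2 + inner a b + F) \<le> TOT"
    unfolding ID T1 TOT_def using P1 P2 P3 P4 P5 P6 PF S1 S2 S3 by linarith
  have EQ: "TOT + (eta\<^sup>2 * rho\<^sup>2 * (alpha\<^sup>2 / 3 + 7 / 3 * alpha * beta + beta\<^sup>2 / 3)) * A + (eta\<^sup>2 / 2) * B
     = (- eta * e1 + eta\<^sup>2 * e2) * A + (- eta * e3 + eta\<^sup>2 * e4) * B
       + (- eta * (1/4 + e5) + eta\<^sup>2 * (e6 + Lf / 2 - Lf\<^sup>2 / 2)) * G - eta / 2 * G0"
    unfolding TOT_def e1_def e2_def e3_def e4_def e5_def e6_def using pos
    by (simp add: field_simps power2_eq_square power3_eq_cube)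
  have NN: "0 \<le> (eta\<^sup>2 * rho\<^sup>2 * (alpha\<^sup>2 / 3 + 7 / 3 * alpha * beta + beta\<^sup>2 / 3)) * A + (eta\<^sup>2 / 2) * B"
    using pos A0 B0 by (intro add_nonneg_nonneg mult_nonneg_nonneg) auto
  show ?thesis using LE EQ NN unfolding A_def B_def G_def G0_def by linarith
qed

lemma vec_norm_le:
  fixes p q :: "('a::real_inner)^'n"
  assumes "\<And>i. norm (p$i) \<le> c * norm (q$i)" and "0 \<le> c"
  shows "norm p \<le> c * norm q"
proof -
  have "(norm p)\<^sup>2 \<le> (c * norm q)\<^sup>2"
  proof -
    have "(norm p)\<^sup>2 = (\<Sum>i\<in>UNIV. (norm (p$i))\<^sup>2)" by (rule norm_sq_vec)
    also have "\<dots> \<le> (\<Sum>i\<in>UNIV. (c * norm (q$i))\<^sup>2)"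
      by (intro sum_mono power_mono assms) simp
    also have "\<dots> = c\<^sup>2 * (\<Sum>i\<in>UNIV. (norm (q$i))\<^sup>2)" by (simp add: power_mult_distrib sum_distrib_left)
    also have "\<dots> = (c * norm q)\<^sup>2" by (simp add: power_mult_distrib norm_sq_vec)
    finally show ?thesis .
  qed
  then show ?thesis using assms(2) by (simp add: power2_le_iff_abs_le abs_le_iff)
qed

lemma telescope:
  fixes V W :: "nat \<Rightarrow> real"
  assumes step: "\<And>k. V (Suc k) \<le> V k - e7 * W k"
  shows "e7 * (\<Sum>k\<in>{0..T}. W k) \<le> V 0 - V (Suc T)"
proof (induction T)
  case 0 then show ?case using step[of 0] by simp
next
  case (Suc T)
  have "e7 * (\<Sum>k\<in>{0..Suc T}. W k) = e7 * (\<Sum>k\<in>{0..T}. W k) + e7 * W (Suc T)"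
    by (simp add: distrib_left)
  also have "\<dots> \<le> V 0 - V (Suc T) + e7 * W (Suc T)" using Suc by simp
  also have "\<dots> \<le> V 0 - V (Suc (Suc T))" using step[of "Suc T"] by simp
  finally show ?case .
qed

lemma Hop_avg: "Hop (vec_lambda z) $ i = avg z" for z :: "'n::finite \<Rightarrow> 'a::real_vector"
  by (simp add: Hop_nth avg_def)

lemma Kop_nth: "Kop z $ i = z $ i - Hop z $ i" by (simp add: Kop_def)



theorem theorem1:
  fixes A :: "real^'n^'n"
    and f :: "'n \<Rightarrow> real^'p \<Rightarrow> real"
    and gf :: "'n \<Rightarrow> real^'p \<Rightarrow> real^'p"
    and Lf kappa2 alpha beta eta :: real
    and x v :: "nat \<Rightarrow> 'n \<Rightarrow> real^'p"
  assumes n2: "CARD('n) \<ge> 2"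
    and adj: "sym_nonneg_adj A"
    and A1: "graph_connected A"
    and A2: "\<exists>xs. \<forall>y. (1 / real CARD('n)) * (\<Sum>i\<in>UNIV. f i xs) \<le> (1 / real CARD('n)) * (\<Sum>i\<in>UNIV. f i y)"
    and A3_grad: "\<And>i y. (f i has_derivative (\<lambda>h. gf i y \<bullet> h)) (at y)"
    and A3_lip: "\<And>i y z. norm (gf i y - gf i z) \<le> Lf * norm (y - z)"
    and Lf_pos: "Lf > 0"
  defines "Lap \<equiv> laplacian A"
    and "fbar \<equiv> (\<lambda>y. (1 / real CARD('n)) * (\<Sum>i\<in>UNIV. f i y))"
  defines "fstar \<equiv> (INF y. fbar y)"
    and "kappa1 \<equiv> (2 + 3 * Lf\<^sup>2) / (2 * rho2 Lap)"
    and "kappa3 \<equiv> (1 / 4) * (1 + sqrt (1 + 8 * kappa2 + 8 / rho2 Lap))"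
    and "kappa4 \<equiv> (kappa2 + 1 / rho2 Lap) * Lf\<^sup>2
                   + sqrt ((kappa2 + 1 / rho2 Lap)\<^sup>2 * Lf\<^sup>2 + 2) * Lf"
  assumes kappa2: "kappa2 > 1"
    and beta: "beta > Max {kappa1 / (kappa2 - 1), kappa3, kappa4}"
    and alpha: "beta + kappa1 < alpha" "alpha \<le> kappa2 * beta"
  defines "eps1 \<equiv> (alpha - beta) * rho2 Lap - (1 / 2) * (2 + 3 * Lf\<^sup>2)"
    and "eps2 \<equiv> beta\<^sup>2 * rho Lap + (2 * alpha\<^sup>2 + beta\<^sup>2) * (rho Lap)\<^sup>2 + (5 / 2) * Lf\<^sup>2"
    and "eps3 \<equiv> beta - 1 / 2 - alpha / (2 * beta\<^sup>2) - 1 / (2 * beta * rho2 Lap)"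
    and "eps4 \<equiv> 2 * beta\<^sup>2 + 1 / 2"
    and "eps5 \<equiv> 1 / 4 - (1 / (2 * beta)) * (1 / beta + 1 / rho2 Lap + alpha / beta) * Lf\<^sup>2"
    and "eps6 \<equiv> (1 / beta\<^sup>2) * (1 + 1 / rho2 Lap + alpha / beta) * Lf\<^sup>2 + Lf * (1 + Lf) / 2"
  assumes eta: "0 < eta" "eta < Min {eps1 / eps2, eps3 / eps4, eps5 / eps6}"
  defines "eps7 \<equiv> eta * Min {eps1 - eta * eps2, eps3 - eta * eps4, eps5 - eta * eps6, 1 / 4}"
    and "eps8 \<equiv> (alpha + beta) / (2 * beta) + 1 / (2 * rho2 Lap)"
  assumes v0: "(\<Sum>j\<in>UNIV. v 0 j) = 0"
    and x_step: "\<And>k i. x (Suc k) i = x k i - eta *\<^sub>R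
        (alpha *\<^sub>R (\<Sum>j\<in>UNIV. Lap$i$j *\<^sub>R x k j) + beta *\<^sub>R v k i + gf i (x k i))"
    and v_step: "\<And>k i. v (Suc k) i = v k i + (eta * beta) *\<^sub>R (\<Sum>j\<in>UNIV. Lap$i$j *\<^sub>R x k j)"
  defines "gradf \<equiv> (\<lambda>y. (1 / real CARD('n)) *\<^sub>R (\<Sum>i\<in>UNIV. gf i y))"
  defines "Vhat \<equiv> (\<lambda>k. Knorm2 (x k)
                      + Knorm2 (\<lambda>i. v k i + (1 / beta) *\<^sub>R gf i (avg (x k)))
                      + real CARD('n) * (fbar (avg (x k)) - fstar))"
    and "W \<equiv> (\<lambda>k. (\<Sum>i\<in>UNIV. (norm (x k i - avg (x k)))\<^sup>2)
                      + Knorm2 (\<lambda>i. v k i + (1 / beta) *\<^sub>R gf i (avg (x k)))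
                      + real CARD('n) * (norm (avg (\<lambda>i. gf i (x k i))))\<^sup>2
                      + real CARD('n) * (norm (gradf (avg (x k))))\<^sup>2)"
  shows "\<forall>T::nat.
           (1 / real (T + 1)) * (\<Sum>k\<in>{0..T}. W k) \<le> eps8 * Vhat 0 / (eps7 * real (T + 1))
         \<and> fbar (avg (x (Suc T))) - fstar \<le> eps8 * Vhat 0 / real CARD('n)"
proof -
  have Lap_def: "Lap = laplacian A" using assms(8) by simp
  have fbar_def: "fbar = (\<lambda>y. (1 / real CARD('n)) * (\<Sum>i\<in>UNIV. f i y))" using assms(9) by simp
  have fstar_def: "fstar = (INF y. fbar y)" using assms(10) by simp
  have kappa1_def: "kappa1 = (2 + 3 * Lf\<^sup>2) / (2 * rho2 Lap)" using assms(11) by simp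
  have kappa3_def: "kappa3 = (1 / 4) * (1 + sqrt (1 + 8 * kappa2 + 8 / rho2 Lap))" using assms(12) by simp
  have eps1_def: "eps1 = (alpha - beta) * rho2 Lap - (1 / 2) * (2 + 3 * Lf\<^sup>2)" using assms(18) by simp
  have eps2_def: "eps2 = beta\<^sup>2 * rho Lap + (2 * alpha\<^sup>2 + beta\<^sup>2) * (rho Lap)\<^sup>2 + (5 / 2) * Lf\<^sup>2" using assms(19) by simp
  have eps3_def: "eps3 = beta - 1 / 2 - alpha / (2 * beta\<^sup>2) - 1 / (2 * beta * rho2 Lap)" using assms(20) by simp
  have eps4_def: "eps4 = 2 * beta\<^sup>2 + 1 / 2" using assms(21) by simp
  have eps5_def: "eps5 = 1 / 4 - (1 / (2 * beta)) * (1 / beta + 1 / rho2 Lap + alpha / beta) * Lf\<^sup>2" using assms(22) by simp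
  have eps6_def: "eps6 = (1 / beta\<^sup>2) * (1 + 1 / rho2 Lap + alpha / beta) * Lf\<^sup>2 + Lf * (1 + Lf) / 2" using assms(23) by simp
  have eps7_def: "eps7 = eta * Min {eps1 - eta * eps2, eps3 - eta * eps4, eps5 - eta * eps6, 1 / 4}" using assms(26) by simp
  have eps8_def: "eps8 = (alpha + beta) / (2 * beta) + 1 / (2 * rho2 Lap)" using assms(27) by simp
  have gradf_def: "gradf = (\<lambda>y. (1 / real CARD('n)) *\<^sub>R (\<Sum>i\<in>UNIV. gf i y))" using assms(31) by simp
  have Vhat_def: "Vhat = (\<lambda>k. Knorm2 (x k)
                      + Knorm2 (\<lambda>i. v k i + (1 / beta) *\<^sub>R gf i (avg (x k)))
                      + real CARD('n) * (fbar (avg (x k)) - fstar))" using assms(32) by simp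
  have W_def: "W = (\<lambda>k. (\<Sum>i\<in>UNIV. (norm (x k i - avg (x k)))\<^sup>2)
                      + Knorm2 (\<lambda>i. v k i + (1 / beta) *\<^sub>R gf i (avg (x k)))
                      + real CARD('n) * (norm (avg (\<lambda>i. gf i (x k i))))\<^sup>2
                      + real CARD('n) * (norm (gradf (avg (x k))))\<^sup>2)" using assms(33) by simp
  have r2pos: "0 < rho2 Lap"
    using spec_lower[OF adj A1 n2, of "0 :: (real^'p)^'n"] by (simp add: Lap_def)
  have rho0: "0 \<le> rho Lap"
    using spec_upper[OF adj, of "0 :: (real^'p)^'n"] by (simp add: Lap_def)
  have k3pos: "0 < kappa3"
  proof -
    have "0 \<le> 1 + 8 * kappa2 + 8 / rho2 Lap" using kappa2 r2pos by (simp add: add_nonneg_nonneg)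
    then have "0 \<le> sqrt (1 + 8 * kappa2 + 8 / rho2 Lap)" by simp
    then have h: "0 < 1 + sqrt (1 + 8 * kappa2 + 8 / rho2 Lap)" by (rule add_pos_nonneg[OF zero_less_one])
    have "0 < (1/4) * (1 + sqrt (1 + 8 * kappa2 + 8 / rho2 Lap))" by (rule mult_pos_pos[OF _ h]) simp
    then show ?thesis unfolding kappa3_def .
  qed
  have bet: "kappa1 / (kappa2 - 1) < beta" "kappa3 < beta" "kappa4 < beta" using beta by simp_all
  have bpos: "0 < beta" using bet(2) k3pos by simp
  have k1pos: "0 < kappa1" unfolding kappa1_def using r2pos by (simp add: add_pos_nonneg)
  have ab: "beta < alpha" using alpha(1) k1pos by simp
  have apos: "0 < alpha" using ab bpos by simp
  have e2pos: "0 < eps2" unfolding eps2_def using rho0 Lf_pos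
    by (intro add_nonneg_pos add_nonneg_nonneg mult_nonneg_nonneg) auto
  have e4pos: "0 < eps4" unfolding eps4_def by (simp add: add_nonneg_pos)
  have e6ge: "Lf / 2 \<le> eps6"
  proof -
    have "0 \<le> (1 / beta\<^sup>2) * (1 + 1 / rho2 Lap + alpha / beta) * Lf\<^sup>2"
      using bpos r2pos apos by (intro mult_nonneg_nonneg add_nonneg_nonneg) auto
    moreover have "Lf / 2 \<le> Lf * (1 + Lf) / 2" using Lf_pos by (simp add: field_simps)
    ultimately show ?thesis unfolding eps6_def by linarith
  qed
  have e6pos: "0 < eps6" using e6ge Lf_pos by linarith
  have e5le: "eps5 \<le> 1/4"
  proof -
    have "0 \<le> (1 / (2 * beta)) * (1 / beta + 1 / rho2 Lap + alpha / beta) * Lf\<^sup>2"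
      using bpos r2pos apos by (intro mult_nonneg_nonneg add_nonneg_nonneg) auto
    then show ?thesis unfolding eps5_def by linarith
  qed
  have etalt: "eta < eps1 / eps2" "eta < eps3 / eps4" "eta < eps5 / eps6" using eta(2) by simp_all
  have m1: "0 < eps1 - eta * eps2" using etalt(1) e2pos by (simp add: less_divide_eq)
  have m2: "0 < eps3 - eta * eps4" using etalt(2) e4pos by (simp add: less_divide_eq)
  have m3: "0 < eps5 - eta * eps6" using etalt(3) e6pos by (simp add: less_divide_eq)
  define mm where "mm = Min {eps1 - eta * eps2, eps3 - eta * eps4, eps5 - eta * eps6, 1 / 4}"
  have mm_le: "mm \<le> eps1 - eta * eps2" "mm \<le> eps3 - eta * eps4" "mm \<le> eps5 - eta * eps6" "mm \<le> 1/4"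
    unfolding mm_def by (intro Min_le; simp)+
  have mm_pos: "0 < mm" unfolding mm_def using m1 m2 m3 by simp
  have e7eq: "eps7 = eta * mm" by (simp add: eps7_def mm_def)
  have e7pos: "0 < eps7" using e7eq mm_pos eta(1) by simp
  have etaLf: "eta * Lf / 2 \<le> 1/4"
  proof -
    have "eta * (Lf / 2) \<le> eta * eps6" using e6ge eta(1) by (intro mult_left_mono) auto
    moreover have "eta * eps6 < eps5" using m3 by linarith
    moreover have "eta * Lf / 2 = eta * (Lf / 2)" by simp
    ultimately show ?thesis using e5le by linarith
  qed
  obtain Q :: "(real^'p)^'n \<Rightarrow> (real^'p)^'n" where linQ: "linear Q"
    and symQ: "\<And>x y. inner (Q x) y = inner x (Q y)" and psdQ: "\<And>x. 0 \<le> inner x (Q x)"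
    and QL: "\<And>x. Q (Lop Lap x) = Kop x"
    and Qup: "\<And>x. inner x (Q x) \<le> (norm (Kop x))\<^sup>2 / rho2 Lap"
    using Q_exists[OF adj A1 n2] unfolding Lap_def by blast
  let ?n = "real CARD('n)"
  define X where "X k = vec_lambda (x k)" for k
  define Vv where "Vv k = vec_lambda (v k)" for k
  define xb where "xb k = avg (x k)" for k
  define G where "G k = (\<chi> i. gf i (x k i))" for k
  define G0 where "G0 k = (\<chi> i. gf i (xb k))" for k
  define L where "L = (Lop Lap :: (real^'p)^'n \<Rightarrow> _)"
  have adjL: "sym_nonneg_adj A" by (rule adj)
  have L_Hop: "Hop (L z) = 0" for z unfolding L_def Lap_def by (rule Hop_Lop[OF adj])
  have L_Kop: "L (Kop z) = L z" for z unfolding L_def Lap_def by (rule Lop_Kop)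
  have Kop_L: "Kop (L z) = L z" for z unfolding L_def Lap_def by (rule Kop_Lop[OF adj])
  have linL: "linear L" unfolding L_def by (rule linear_Lop)
  have Xstep: "X (Suc k) = X k - eta *\<^sub>R (alpha *\<^sub>R L (X k) + beta *\<^sub>R Vv k + G k)" for k
    unfolding Vv_def X_def G_def by (simp add: vec_eq_iff L_def Lop_nth x_step)
  have Vstep: "Vv (Suc k) = Vv k + (eta * beta) *\<^sub>R L (X k)" for k
    unfolding Vv_def X_def by (simp add: vec_eq_iff L_def Lop_nth v_step)
  have HV: "Hop (Vv k) = 0" for k
  proof (induction k)
    case 0 then show ?case using v0 by (simp add: vec_eq_iff Hop_nth Vv_def)
  next
    case (Suc k) then show ?case
      by (simp add: Vstep linear_add[OF linear_Hop] linear_scale[OF linear_Hop] L_Hop)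
  qed
  have KV: "Kop (Vv k) = Vv k" for k by (rule Kop_eq_self[OF HV])
  have HX: "Hop (X k) $ i = xb k" for k i by (simp add: X_def xb_def Hop_avg)
  have HG: "Hop (G k) $ i = avg (\<lambda>i. gf i (x k i))" for k i by (simp add: G_def Hop_avg)
  have HG0: "Hop (G0 k) $ i = gradf (xb k)" for k i
    by (simp add: G0_def Hop_nth gradf_def)
  have xbstep: "xb (Suc k) = xb k - eta *\<^sub>R avg (\<lambda>i. gf i (x k i))" for k
  proof -
    have "Hop (X (Suc k)) = Hop (X k) - eta *\<^sub>R Hop (G k)"
      by (simp add: Xstep linear_add[OF linear_Hop] linear_diff[OF linear_Hop] linear_scale[OF linear_Hop] L_Hop HV)
    then have "Hop (X (Suc k)) $ undefined = Hop (X k) $ undefined - eta *\<^sub>R Hop (G k) $ undefined" by simp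
    then show ?thesis by (simp only: HX HG)
  qed
  define a where "a k = Kop (X k)" for k
  define b where "b k = Kop (Vv k + (1/beta) *\<^sub>R G0 k)" for k
  define l where "l k = L (X k)" for k
  define d where "d k = Kop (G k - G0 k)" for k
  define Dl where "Dl k = Kop (G0 (Suc k) - G0 k)" for k
  define hg where "hg k = Hop (G k)" for k
  define hg0 where "hg0 k = Hop (G0 k)" for k
  have bne: "beta \<noteq> 0" using bpos by simp
  have bk: "b k = Vv k + (1/beta) *\<^sub>R Kop (G0 k)" for k
    by (simp add: b_def linear_add[OF linear_Kop] linear_scale[OF linear_Kop] KV)
  have astep: "a (Suc k) = a k - eta *\<^sub>R (alpha *\<^sub>R l k + beta *\<^sub>R b k + d k)" for k
  proof -
    have "a (Suc k) = a k - eta *\<^sub>R (alpha *\<^sub>R l k + beta *\<^sub>R Vv k + Kop (G k))"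
      by (simp add: a_def l_def Xstep linear_add[OF linear_Kop] linear_diff[OF linear_Kop]
          linear_scale[OF linear_Kop] Kop_L KV)
    moreover have "alpha *\<^sub>R l k + beta *\<^sub>R Vv k + Kop (G k) = alpha *\<^sub>R l k + beta *\<^sub>R b k + d k"
      using bne by (simp add: bk d_def linear_diff[OF linear_Kop] scaleR_add_right)
    ultimately show ?thesis by simp
  qed
  have bstep: "b (Suc k) = b k + ((eta * beta) *\<^sub>R l k + (1/beta) *\<^sub>R Dl k)" for k
    by (simp add: bk Vstep l_def Dl_def linear_diff[OF linear_Kop] algebra_simps)
  have Ql: "Q (l k) = a k" for k unfolding l_def a_def L_def by (rule QL)
  have Kb: "Kop (b k) = b k" for k by (simp add: b_def Kop_Kop)
  have KD: "Kop (Dl k) = Dl k" for k by (simp add: Dl_def Kop_Kop)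
  have Qb: "inner (b k) (Q (b k)) \<le> (norm (b k))\<^sup>2 / rho2 Lap" for k using Qup[of "b k"] by (simp add: Kb)
  have QD: "inner (Dl k) (Q (Dl k)) \<le> (norm (Dl k))\<^sup>2 / rho2 Lap" for k using Qup[of "Dl k"] by (simp add: KD)
  have la: "l k = L (a k)" for k by (simp add: l_def a_def L_Kop)
  have al_lo: "rho2 Lap * (norm (a k))\<^sup>2 \<le> inner (a k) (l k)" for k
  proof -
    have "rho2 Lap * (norm (Kop (a k)))\<^sup>2 \<le> inner (a k) (L (a k))"
      using spec_lower[OF adj A1 n2, of "a k"] by (simp add: L_def Lap_def)
    then show ?thesis by (simp add: a_def Kop_Kop la)
  qed
  have al_hi: "inner (a k) (l k) \<le> rho Lap * (norm (a k))\<^sup>2" for k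
    using spec_upper[OF adj, of "a k"] by (simp add: la L_def Lap_def)
  have l_hi: "(norm (l k))\<^sup>2 \<le> (rho Lap)\<^sup>2 * (norm (a k))\<^sup>2" for k
    using spec_op[OF adj, of "a k"] by (simp add: la L_def Lap_def)
  have GG0: "norm (G k - G0 k) \<le> Lf * norm (a k)" for k
  proof (rule vec_norm_le)
    show "norm ((G k - G0 k) $ i) \<le> Lf * norm (a k $ i)" for i
      using A3_lip[of i "x k i" "xb k"] by (simp add: G_def G0_def a_def Kop_nth X_def Hop_avg xb_def)
  qed (use Lf_pos in simp)
  have dn: "norm (d k) \<le> Lf * norm (a k)" for k
    using norm_Kop_le[of "G k - G0 k"] GG0[of k] by (simp add: d_def)
  have gn: "norm (hg k - hg0 k) \<le> Lf * norm (a k)" for k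
    using norm_Hop_le[of "G k - G0 k"] GG0[of k] by (simp add: hg_def hg0_def linear_diff[OF linear_Hop])
  have Dn: "norm (Dl k) \<le> eta * Lf * norm (hg k)" for k
  proof -
    have "norm (G0 (Suc k) - G0 k) \<le> Lf * norm (eta *\<^sub>R hg k)"
    proof (rule vec_norm_le)
      show "norm ((G0 (Suc k) - G0 k) $ i) \<le> Lf * norm ((eta *\<^sub>R hg k) $ i)" for i
        using A3_lip[of i "xb (Suc k)" "xb k"] by (simp add: G0_def hg_def HG xbstep)
    qed (use Lf_pos in simp)
    then show ?thesis using norm_Kop_le[of "G0 (Suc k) - G0 k"] eta(1)
      by (simp add: Dl_def mult.commute mult.left_commute)
  qed
  obtain xs where xs: "\<And>y. fbar xs \<le> fbar y" using A2 unfolding fbar_def by blast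
  have bddf: "bdd_below (range fbar)" using xs by (intro bdd_belowI2) auto
  have fstar_le: "fstar \<le> fbar y" for y unfolding fstar_def by (rule cINF_lower[OF bddf]) simp
  have fder: "(fbar has_derivative (\<lambda>h. gradf y \<bullet> h)) (at y)" for y
  proof -
    have "((\<lambda>y. (1 / ?n) * (\<Sum>i\<in>UNIV. f i y)) has_derivative (\<lambda>h. (1 / ?n) * (\<Sum>i\<in>UNIV. gf i y \<bullet> h))) (at y)"
      by (intro has_derivative_mult_right has_derivative_sum A3_grad)
    then show ?thesis unfolding fbar_def
      by (rule has_derivative_eq_rhs) (simp add: gradf_def fun_eq_iff inner_sum_left)
  qed
  have glip: "norm (gradf y - gradf z) \<le> Lf * norm (y - z)" for y z
  proof -
    have "gradf y - gradf z = (1 / ?n) *\<^sub>R (\<Sum>i\<in>UNIV. gf i y - gf i z)"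
      by (simp add: gradf_def sum_subtractf scaleR_diff_right)
    then have "norm (gradf y - gradf z) = (1 / ?n) * norm (\<Sum>i\<in>UNIV. gf i y - gf i z)" by simp
    also have "\<dots> \<le> (1 / ?n) * (\<Sum>i\<in>UNIV. norm (gf i y - gf i z))"
      by (intro mult_left_mono norm_sum) simp
    also have "\<dots> \<le> (1 / ?n) * (\<Sum>i\<in>(UNIV::'n set). Lf * norm (y - z))"
      by (intro mult_left_mono sum_mono A3_lip) simp
    also have "\<dots> = Lf * norm (y - z)" by simp
    finally show ?thesis .
  qed
  define F where "F k = ?n * (fbar (xb k) - fstar)" for k
  have F0: "0 \<le> F k" for k using fstar_le[of "xb k"] by (simp add: F_def)
  have hgsq: "(norm (hg k))\<^sup>2 = ?n * (norm (avg (\<lambda>i. gf i (x k i))))\<^sup>2" for k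
    by (simp add: norm_sq_vec hg_def HG)
  have hg0sq: "(norm (hg0 k))\<^sup>2 = ?n * (norm (gradf (xb k)))\<^sup>2" for k
    by (simp add: norm_sq_vec hg0_def HG0)
  have hginner: "inner (hg0 k) (hg k) = ?n * (gradf (xb k) \<bullet> avg (\<lambda>i. gf i (x k i)))" for k
    by (simp add: inner_vec_def hg_def hg0_def HG HG0)
  have Fs: "F (Suc k) - F k \<le> - eta * inner (hg0 k) (hg k) + eta\<^sup>2 * Lf * (norm (hg k))\<^sup>2" for k
  proof -
    define ag where "ag = avg (\<lambda>i. gf i (x k i))"
    have sd: "fbar (xb (Suc k)) \<le> fbar (xb k) + gradf (xb k) \<bullet> (xb (Suc k) - xb k) + Lf * (norm (xb (Suc k) - xb k))\<^sup>2"
      by (rule smooth_descent[OF fder glip]) (use Lf_pos in simp)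
    have dx: "xb (Suc k) - xb k = - eta *\<^sub>R ag" by (simp add: xbstep ag_def)
    have "F (Suc k) - F k = ?n * (fbar (xb (Suc k)) - fbar (xb k))" by (simp add: F_def algebra_simps)
    also have "\<dots> \<le> ?n * (gradf (xb k) \<bullet> (- eta *\<^sub>R ag) + Lf * (norm (- eta *\<^sub>R ag))\<^sup>2)"
      using sd dx by (intro mult_left_mono) auto
    also have "\<dots> = - eta * (?n * (gradf (xb k) \<bullet> ag)) + eta\<^sup>2 * Lf * (?n * (norm ag)\<^sup>2)"
      by (simp add: power_mult_distrib algebra_simps)
    also have "\<dots> = - eta * inner (hg0 k) (hg k) + eta\<^sup>2 * Lf * (norm (hg k))\<^sup>2"
      by (simp add: hginner hgsq ag_def)
    finally show ?thesis .
  qed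
  define VV where "VV k = (1/2) * (norm (a k))\<^sup>2 + (1/2) * inner (b k) (Q (b k)) + alpha/(2*beta) * (norm (b k))\<^sup>2 + inner (a k) (b k) + F k" for k
  define WW where "WW k = (norm (a k))\<^sup>2 + (norm (b k))\<^sup>2 + (norm (hg k))\<^sup>2 + (norm (hg0 k))\<^sup>2" for k
  have step: "VV (Suc k) \<le> VV k - eps7 * WW k" for k
  proof -
    have core: "VV (Suc k) - VV k \<le> (- eta * eps1 + eta\<^sup>2 * eps2) * (norm (a k))\<^sup>2 + (- eta * eps3 + eta\<^sup>2 * eps4) * (norm (b k))\<^sup>2
       + (- eta * (1/4 + eps5) + eta\<^sup>2 * (eps6 + Lf / 2 - Lf\<^sup>2 / 2)) * (norm (hg k))\<^sup>2 - eta / 2 * (norm (hg0 k))\<^sup>2"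
      unfolding VV_def astep bstep eps1_def eps2_def eps3_def eps4_def eps5_def eps6_def
      by (rule step_core[OF eta(1) bpos ab r2pos rho0 Lf_pos linQ symQ psdQ Ql Qb QD al_lo al_hi l_hi dn Dn gn Fs])
    have c1: "- eta * eps1 + eta\<^sup>2 * eps2 \<le> - eps7"
    proof -
      have "eta * mm \<le> eta * (eps1 - eta * eps2)" using mm_le(1) eta(1) by (intro mult_left_mono) auto
      then show ?thesis by (simp add: e7eq power2_eq_square algebra_simps)
    qed
    have c2: "- eta * eps3 + eta\<^sup>2 * eps4 \<le> - eps7"
    proof -
      have "eta * mm \<le> eta * (eps3 - eta * eps4)" using mm_le(2) eta(1) by (intro mult_left_mono) auto
      then show ?thesis by (simp add: e7eq power2_eq_square algebra_simps)
    qed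
    have c3: "- eta * (1/4 + eps5) + eta\<^sup>2 * (eps6 + Lf / 2 - Lf\<^sup>2 / 2) \<le> - eps7"
    proof -
      have "eta * mm \<le> eta * (eps5 - eta * eps6)" using mm_le(3) eta(1) by (intro mult_left_mono) auto
      moreover have "eta * (eta * Lf / 2) \<le> eta * (1/4)" using etaLf eta(1) by (intro mult_left_mono) auto
      moreover have "0 \<le> eta\<^sup>2 * Lf\<^sup>2 / 2" by simp
      ultimately show ?thesis by (simp add: e7eq power2_eq_square algebra_simps)
    qed
    have c4: "- eta / 2 \<le> - eps7"
    proof -
      have "eta * mm \<le> eta * (1/4)" using mm_le(4) eta(1) by (intro mult_left_mono) auto
      then show ?thesis using eta(1) by (simp add: e7eq)
    qed
    have "(- eta * eps1 + eta\<^sup>2 * eps2) * (norm (a k))\<^sup>2 \<le> - eps7 * (norm (a k))\<^sup>2"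
      using c1 by (intro mult_right_mono) auto
    moreover have "(- eta * eps3 + eta\<^sup>2 * eps4) * (norm (b k))\<^sup>2 \<le> - eps7 * (norm (b k))\<^sup>2"
      using c2 by (intro mult_right_mono) auto
    moreover have "(- eta * (1/4 + eps5) + eta\<^sup>2 * (eps6 + Lf / 2 - Lf\<^sup>2 / 2)) * (norm (hg k))\<^sup>2 \<le> - eps7 * (norm (hg k))\<^sup>2"
      using c3 by (intro mult_right_mono) auto
    moreover have "- eta / 2 * (norm (hg0 k))\<^sup>2 \<le> - eps7 * (norm (hg0 k))\<^sup>2"
      using c4 by (intro mult_right_mono) auto
    ultimately show ?thesis using core unfolding WW_def by (simp add: algebra_simps)
  qed
  have anth: "a k $ i = x k i - avg (x k)" for k i by (simp add: a_def Kop_nth X_def Hop_avg)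
  have vlam: "vec_lambda (\<lambda>i. v k i + (1 / beta) *\<^sub>R gf i (avg (x k))) = Vv k + (1/beta) *\<^sub>R G0 k" for k
    by (simp add: vec_eq_iff Vv_def G0_def xb_def)
  have Wk: "W k = WW k" for k
  proof -
    have "(\<Sum>i\<in>UNIV. (norm (x k i - avg (x k)))\<^sup>2) = (norm (a k))\<^sup>2" by (simp add: norm_sq_vec anth)
    moreover have "Knorm2 (\<lambda>i. v k i + (1 / beta) *\<^sub>R gf i (avg (x k))) = (norm (b k))\<^sup>2"
      by (simp add: Knorm2_eq vlam b_def)
    moreover have "real CARD('n) * (norm (gradf (avg (x k))))\<^sup>2 = (norm (hg0 k))\<^sup>2"
      by (simp add: hg0sq xb_def)
    ultimately show ?thesis by (simp add: W_def WW_def hgsq)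
  qed
  have Vhk: "Vhat k = (norm (a k))\<^sup>2 + (norm (b k))\<^sup>2 + F k" for k
  proof -
    have "Knorm2 (x k) = (norm (a k))\<^sup>2" by (simp add: Knorm2_eq a_def X_def)
    moreover have "Knorm2 (\<lambda>i. v k i + (1 / beta) *\<^sub>R gf i (avg (x k))) = (norm (b k))\<^sup>2"
      by (simp add: Knorm2_eq vlam b_def)
    ultimately show ?thesis by (simp add: Vhat_def F_def xb_def)
  qed
  have WW0: "0 \<le> WW k" for k by (simp add: WW_def)
  have e8ge: "1 \<le> eps8"
  proof -
    have "1 \<le> (alpha + beta) / (2 * beta)" using ab bpos by (simp add: le_divide_eq)
    moreover have "0 \<le> 1 / (2 * rho2 Lap)" using r2pos by simp
    ultimately show ?thesis unfolding eps8_def by linarith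
  qed
  have VV_lo: "F k \<le> VV k" for k
  proof -
    have y: "inner (a k) (- b k) \<le> (1/2) * (norm (a k))\<^sup>2 + (1 / (2 * 1)) * (norm (- b k))\<^sup>2"
      by (rule young_inner) simp
    have q: "0 \<le> inner (b k) (Q (b k))" by (rule psdQ)
    have "1/2 * (norm (b k))\<^sup>2 \<le> alpha/(2*beta) * (norm (b k))\<^sup>2"
      using ab bpos by (intro mult_right_mono) (auto simp: divide_simps)
    then show ?thesis using y q unfolding VV_def by simp
  qed
  have VV_up: "VV k \<le> eps8 * Vhat k" for k
  proof -
    have y: "inner (a k) (b k) \<le> (1/2) * (norm (a k))\<^sup>2 + (1 / (2 * 1)) * (norm (b k))\<^sup>2"
      by (rule young_inner) simp
    have q: "inner (b k) (Q (b k)) \<le> (norm (b k))\<^sup>2 / rho2 Lap" by (rule Qb)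
    have e: "eps8 * (norm (b k))\<^sup>2 = alpha/(2*beta) * (norm (b k))\<^sup>2 + 1/2 * (norm (b k))\<^sup>2 + 1/2 * ((norm (b k))\<^sup>2 / rho2 Lap)"
      unfolding eps8_def using bpos r2pos by (simp add: field_simps)
    have "VV k \<le> (norm (a k))\<^sup>2 + eps8 * (norm (b k))\<^sup>2 + F k"
      using y q e unfolding VV_def by simp
    also have "\<dots> \<le> eps8 * (norm (a k))\<^sup>2 + eps8 * (norm (b k))\<^sup>2 + eps8 * F k"
      using e8ge F0[of k] by (intro add_mono order_refl) (auto intro: mult_right_mono[of 1 eps8, simplified])
    finally show ?thesis by (simp add: Vhk algebra_simps)
  qed
  show ?thesis
  proof (intro allI conjI)
    fix T :: nat
    have tel: "eps7 * (\<Sum>k\<in>{0..T}. WW k) \<le> VV 0 - VV (Suc T)" by (rule telescope[where V=VV and W=WW, OF step])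
    have SW0: "0 \<le> (\<Sum>k\<in>{0..T}. WW k)" by (intro sum_nonneg WW0)
    have VS0: "0 \<le> VV (Suc T)" using VV_lo[of "Suc T"] F0[of "Suc T"] by linarith
    have sumW: "(\<Sum>k\<in>{0..T}. W k) = (\<Sum>k\<in>{0..T}. WW k)" by (simp add: Wk)
    have main: "eps7 * (\<Sum>k\<in>{0..T}. W k) \<le> eps8 * Vhat 0"
      using tel VS0 VV_up[of 0] unfolding sumW by linarith
    then have "(\<Sum>k\<in>{0..T}. W k) \<le> eps8 * Vhat 0 / eps7" using e7pos by (simp add: le_divide_eq mult.commute)
    then have "(1 / real (T + 1)) * (\<Sum>k\<in>{0..T}. W k) \<le> (1 / real (T + 1)) * (eps8 * Vhat 0 / eps7)"
      by (intro mult_left_mono) auto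
    then show "(1 / real (T + 1)) * (\<Sum>k\<in>{0..T}. W k) \<le> eps8 * Vhat 0 / (eps7 * real (T + 1))"
      by (simp add: field_simps)
    have "F (Suc T) \<le> eps8 * Vhat 0"
      using VV_lo[of "Suc T"] tel SW0 e7pos VV_up[of 0] mult_nonneg_nonneg[of eps7 "\<Sum>k\<in>{0..T}. WW k"] by linarith
    then have "real CARD('n) * (fbar (avg (x (Suc T))) - fstar) \<le> eps8 * Vhat 0" by (simp add: F_def xb_def)
    then show "fbar (avg (x (Suc T))) - fstar \<le> eps8 * Vhat 0 / real CARD('n)"
      by (simp add: le_divide_eq mult.commute)
  qed
qed

end
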